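(* Let $\rho$ be a bipartite density matrix on $\mathbb{C}^n\otimes\mathbb{C}^m$ such that its partial transpose $\rho^{PT}$ is not positive semidefinite. Then $\rho$ can be converted by local quantum operations and classical communication (LQ+CC) into a density matrix $\rho_{bc}$ on $\mathbb{C}^d\otimes\mathbb{C}^d$, for some $d\le\min(n,m)$ and some real parameters $b,c$, such that $\rho_{bc}^{PT}$ is not positive semidefinite, where $$\rho_{bc}=a\sum_{i=0}^{d-1}|ii\rangle\langle ii|+b\sum_{0\le i<j\le d-1}|\psi^-_{ij}\rangle\langle\psi^-_{ij}|+c\sum_{0\le i<j\le d-1}|\psi^+_{ij}\rangle\langle\psi^+_{ij}|,\qquad da+(b+c)\frac{d(d-1)}{2}=1.$$
   Context: $\{|i\rangle\}$ is an orthonormal basis of $\mathbb{C}^d$ and $|\psi^{\pm}_{ij}\rangle=\frac{1}{\sqrt2}(|ij\rangle\pm|ji\rangle)$. The partial transpose (applied to the second factor, Bob's) is defined by $\langle ij|\rho^{PT}|kl\rangle=\langle il|\rho|kj\rangle$; whether $\rho^{PT}\ge0$ does not depend on the basis used. LQ+CC operations are arbitrary sequences of local quantum operations by each party (appending ancillas, local unitaries, local measurements/filters with postselection on outcomes, discarding subsystems, local projections) together with classical communication between the parties. *)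

theory Defs
  imports Complex_Main "Jordan_Normal_Form.Matrix"
begin

(* Bipartite operators on C^n (x) C^m are (n*m) x (n*m) complex matrices;
   the product basis vector |i j> (i < n, j < m) has index i*m + j. *)

definition adj :: "complex mat \<Rightarrow> complex mat" where
  "adj A = mat (dim_col A) (dim_row A) (\<lambda>(i,j). cnj (A $$ (j,i)))"

definition mtrace :: "complex mat \<Rightarrow> complex" where
  "mtrace A = (\<Sum>i<dim_row A. A $$ (i,i))"

definition psd :: "complex mat \<Rightarrow> bool" where
  "psd A \<longleftrightarrow> dim_col A = dim_row A \<and> adj A = A \<and>
     (\<forall>v \<in> carrier_vec (dim_row A).
        0 \<le> Re (\<Sum>i<dim_row A. \<Sum>j<dim_row A. cnj (v $ i) * A $$ (i,j) * v $ j))"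

definition density_mat :: "nat \<Rightarrow> complex mat \<Rightarrow> bool" where
  "density_mat N \<rho> \<longleftrightarrow> \<rho> \<in> carrier_mat N N \<and> psd \<rho> \<and> mtrace \<rho> = 1"

definition kron :: "complex mat \<Rightarrow> complex mat \<Rightarrow> complex mat" where
  "kron A B = mat (dim_row A * dim_row B) (dim_col A * dim_col B)
     (\<lambda>(r,s). A $$ (r div dim_row B, s div dim_col B) * B $$ (r mod dim_row B, s mod dim_col B))"

(* partial transpose on the second factor of C^n (x) C^m:
   <ij| rho^PT |kl> = <il| rho |kj> *)
definition ptrans :: "nat \<Rightarrow> nat \<Rightarrow> complex mat \<Rightarrow> complex mat" where
  "ptrans n m \<rho> = mat (n*m) (n*m)
     (\<lambda>(r,s). \<rho> $$ ((r div m) * m + s mod m, (s div m) * m + r mod m))"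

definition msum :: "nat \<Rightarrow> complex mat list \<Rightarrow> complex mat" where
  "msum N xs = foldr (+) xs (0\<^sub>m N N)"

(* LQ+CC operations, given by a list of product Kraus operators (A_k, B_k)
   (the full record of classical outcomes).  locc a b a' b' K: the operation maps
   C^a (x) C^b to C^a' (x) C^b'.
   - alice/bob: a local (trace non-increasing) instrument on one side, each
     Kraus operator being one recorded outcome (dropping outcomes = postselection;
     ancillas, unitaries, projections, discarding subsystems are special cases);
   - comp: after a LQ+CC operation, the outcome is communicated and, conditioned on
     it, a further LQ+CC operation is applied. *)
inductive locc :: "nat \<Rightarrow> nat \<Rightarrow> nat \<Rightarrow> nat \<Rightarrow> (complex mat \<times> complex mat) list \<Rightarrow> bool" where
  alice: "\<lbrakk>\<forall>A\<in>set As. A \<in> carrier_mat a' a;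
          psd (1\<^sub>m a - msum a (map (\<lambda>A. adj A * A) As))\<rbrakk>
        \<Longrightarrow> locc a b a' b (map (\<lambda>A. (A, 1\<^sub>m b)) As)"
| bob: "\<lbrakk>\<forall>B\<in>set Bs. B \<in> carrier_mat b' b;
          psd (1\<^sub>m b - msum b (map (\<lambda>B. adj B * B) Bs))\<rbrakk>
        \<Longrightarrow> locc a b a b' (map (\<lambda>B. (1\<^sub>m a, B)) Bs)"
| comp: "\<lbrakk>locc a b a1 b1 K; length Ls = length K; \<forall>L\<in>set Ls. locc a1 b1 a2 b2 L\<rbrakk>
        \<Longrightarrow> locc a b a2 b2
              (concat (map2 (\<lambda>(A,B) L. map (\<lambda>(A',B'). (A' * A, B' * B)) L) K Ls))"

definition apply_kraus :: "nat \<Rightarrow> (complex mat \<times> complex mat) list \<Rightarrow> complex mat \<Rightarrow> complex mat" where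
  "apply_kraus N K \<rho> = msum N (map (\<lambda>(A,B). kron A B * \<rho> * adj (kron A B)) K)"

definition locc_convertible ::
  "nat \<Rightarrow> nat \<Rightarrow> nat \<Rightarrow> nat \<Rightarrow> complex mat \<Rightarrow> complex mat \<Rightarrow> bool" where
  "locc_convertible n m n' m' \<rho> \<sigma> \<longleftrightarrow>
     (\<exists>K. locc n m n' m' K \<and>
        (let \<tau> = apply_kraus (n'*m') K \<rho> in mtrace \<tau> \<noteq> 0 \<and> \<sigma> = (1 / mtrace \<tau>) \<cdot>\<^sub>m \<tau>))"

definition ket2 :: "nat \<Rightarrow> nat \<Rightarrow> nat \<Rightarrow> complex vec" where
  "ket2 d i j = unit_vec (d*d) (i*d + j)"

(* |psi^{+-}_{ij}> = (|ij> +- |ji>)/sqrt 2, s = +1 or -1 *)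
definition psi :: "complex \<Rightarrow> nat \<Rightarrow> nat \<Rightarrow> nat \<Rightarrow> complex vec" where
  "psi s d i j = complex_of_real (1 / sqrt 2) \<cdot>\<^sub>v (ket2 d i j + s \<cdot>\<^sub>v ket2 d j i)"

definition proj :: "complex vec \<Rightarrow> complex mat" where
  "proj v = mat (dim_vec v) (dim_vec v) (\<lambda>(r,s). v $ r * cnj (v $ s))"

definition rho_bc :: "nat \<Rightarrow> real \<Rightarrow> real \<Rightarrow> real \<Rightarrow> complex mat" where
  "rho_bc d a b c = mat (d*d) (d*d) (\<lambda>rs.
      complex_of_real a * (\<Sum>i<d. proj (ket2 d i i) $$ rs)
    + complex_of_real b * (\<Sum>(i,j)\<in>{(i,j). i < j \<and> j < d}. proj (psi (-1) d i j) $$ rs)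
    + complex_of_real c * (\<Sum>(i,j)\<in>{(i,j). i < j \<and> j < d}. proj (psi 1 d i j) $$ rs))"

end

theory Submission
  imports Defs "HOL-Combinatorics.Permutations"
begin

lemma sum_split:
  fixes f :: "nat \<Rightarrow> 'a::comm_monoid_add"
  shows "(\<Sum>r<a*b. f r) = (\<Sum>i<a. \<Sum>j<b. f (i*b+j))"
proof -
  have bij: "bij_betw (\<lambda>(i,j). i*b+j) ({..<a} \<times> {..<b}) {..<a*b}"
  proof (rule bij_betwI[where g="\<lambda>r. (r div b, r mod b)"])
    show "(\<lambda>(i, j). i * b + j) \<in> {..<a} \<times> {..<b} \<rightarrow> {..<a * b}"
    proof
      fix x assume "x \<in> {..<a} \<times> {..<b}"
      then obtain i j where x: "x = (i,j)" "i < a" "j < b" by auto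
      have "i*b + j < i*b + b" using x by simp
      also have "\<dots> = (i+1)*b" by simp
      also have "\<dots> \<le> a*b" using x by (intro mult_right_mono) auto
      finally show "(\<lambda>(i, j). i * b + j) x \<in> {..<a*b}" using x by simp
    qed
    show "(\<lambda>r. (r div b, r mod b)) \<in> {..<a * b} \<rightarrow> {..<a} \<times> {..<b}"
      by (auto simp: less_mult_imp_div_less)
         (metis mult_zero_right not_less_zero mod_less_divisor neq0_conv)
  qed auto
  have "(\<Sum>r<a*b. f r) = (\<Sum>x\<in>{..<a} \<times> {..<b}. f ((\<lambda>(i,j). i*b+j) x))"
    using sum.reindex_bij_betw[OF bij, of f] by simp
  also have "\<dots> = (\<Sum>i<a. \<Sum>j<b. f (i*b+j))"
    by (simp add: sum.cartesian_product case_prod_unfold)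
  finally show ?thesis .
qed

lemma idx_eq:
  fixes i j i' j' b :: nat
  assumes "j < b" "j' < b"
  shows "(i*b+j = i'*b+j') \<longleftrightarrow> (i = i' \<and> j = j')"
proof
  assume h: "i*b+j = i'*b+j'"
  have b: "b > 0" using assms by simp
  have "i = (i*b+j) div b" using assms by simp
  also have "\<dots> = (i'*b+j') div b" using h by simp
  also have "\<dots> = i'" using assms by simp
  finally have 1: "i = i'" .
  show "i = i' \<and> j = j'" using h 1 by simp
qed auto

definition qf :: "complex mat \<Rightarrow> complex vec \<Rightarrow> complex" where
  "qf A v = (\<Sum>i<dim_row A. \<Sum>j<dim_row A. cnj (v $ i) * A $$ (i,j) * v $ j)"

lemma psd_iff: "psd A \<longleftrightarrow> dim_col A = dim_row A \<and> adj A = A \<and>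
     (\<forall>v \<in> carrier_vec (dim_row A). 0 \<le> Re (qf A v))"
  unfolding psd_def qf_def by simp

lemma adj_carrier[simp]: "A \<in> carrier_mat a b \<Longrightarrow> adj A \<in> carrier_mat b a"
  by (simp add: adj_def)

lemma adj_index[simp]: "i < dim_col A \<Longrightarrow> j < dim_row A \<Longrightarrow> adj A $$ (i,j) = cnj (A $$ (j,i))"
  by (simp add: adj_def)

lemma adj_dims[simp]: "dim_row (adj A) = dim_col A" "dim_col (adj A) = dim_row A"
  by (simp_all add: adj_def)

lemma adj_adj[simp]: "adj (adj A) = A"
  by (rule eq_matI) (simp_all add: adj_def)

lemma herm_iff: assumes "A \<in> carrier_mat a a"
  shows "adj A = A \<longleftrightarrow> (\<forall>i<a. \<forall>j<a. A $$ (j,i) = cnj (A $$ (i,j)))"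
proof
  assume h: "adj A = A"
  show "\<forall>i<a. \<forall>j<a. A $$ (j,i) = cnj (A $$ (i,j))"
  proof (intro allI impI)
    fix i j assume "i < a" "j < a"
    then have "adj A $$ (j,i) = cnj (A $$ (i,j))" using assms by simp
    then show "A $$ (j,i) = cnj (A $$ (i,j))" using h by simp
  qed
next
  assume h: "\<forall>i<a. \<forall>j<a. A $$ (j,i) = cnj (A $$ (i,j))"
  show "adj A = A"
  proof (rule eq_matI)
    fix i j assume "i < dim_row A" "j < dim_col A"
    then show "adj A $$ (i, j) = A $$ (i, j)" using assms h[rule_format, of i j] by simp
  qed (use assms in auto)
qed

lemma mult3_index:
  assumes "A \<in> carrier_mat a b" "X \<in> carrier_mat b b" "B \<in> carrier_mat c b" "i < a" "j < c"
  shows "(A * X * adj B) $$ (i,j) = (\<Sum>x<b. \<Sum>y<b. A $$ (i,x) * X $$ (x,y) * cnj (B $$ (j,y)))"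
proof -
  have "(A * X * adj B) $$ (i,j) = (\<Sum>y<b. (A*X) $$ (i,y) * cnj (B $$ (j,y)))"
    using assms by (simp add: scalar_prod_def atLeast0LessThan)
  also have "\<dots> = (\<Sum>y<b. (\<Sum>x<b. A $$ (i,x) * X $$ (x,y)) * cnj (B $$ (j,y)))"
    using assms by (simp add: scalar_prod_def atLeast0LessThan)
  also have "\<dots> = (\<Sum>y<b. \<Sum>x<b. A $$ (i,x) * X $$ (x,y) * cnj (B $$ (j,y)))"
    by (simp add: sum_distrib_right)
  also have "\<dots> = (\<Sum>x<b. \<Sum>y<b. A $$ (i,x) * X $$ (x,y) * cnj (B $$ (j,y)))"
    by (rule sum.swap)
  finally show ?thesis .
qed

lemma swap4:
  "(\<Sum>i\<in>I. \<Sum>j\<in>J. \<Sum>x\<in>X. \<Sum>y\<in>Y. F i j x y) = (\<Sum>x\<in>X. \<Sum>y\<in>Y. \<Sum>i\<in>I. \<Sum>j\<in>J. F i j x y)"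
proof -
  have "(\<Sum>i\<in>I. \<Sum>j\<in>J. \<Sum>x\<in>X. \<Sum>y\<in>Y. F i j x y) = (\<Sum>i\<in>I. \<Sum>x\<in>X. \<Sum>j\<in>J. \<Sum>y\<in>Y. F i j x y)"
    by (rule sum.cong[OF refl], rule sum.swap)
  also have "\<dots> = (\<Sum>x\<in>X. \<Sum>i\<in>I. \<Sum>j\<in>J. \<Sum>y\<in>Y. F i j x y)" by (rule sum.swap)
  also have "\<dots> = (\<Sum>x\<in>X. \<Sum>i\<in>I. \<Sum>y\<in>Y. \<Sum>j\<in>J. F i j x y)"
    by (rule sum.cong[OF refl], rule sum.cong[OF refl], rule sum.swap)
  also have "\<dots> = (\<Sum>x\<in>X. \<Sum>y\<in>Y. \<Sum>i\<in>I. \<Sum>j\<in>J. F i j x y)"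
    by (rule sum.cong[OF refl], rule sum.swap)
  finally show ?thesis .
qed

lemma qf_congr:
  assumes A: "A \<in> carrier_mat a b" and X: "X \<in> carrier_mat b b" and v: "v \<in> carrier_vec a"
  shows "qf (A * X * adj A) v = qf X (vec b (\<lambda>x. \<Sum>i<a. cnj (A $$ (i,x)) * v $ i))"
proof -
  have "qf (A * X * adj A) v = (\<Sum>i<a. \<Sum>j<a. cnj (v $ i) * (A * X * adj A) $$ (i,j) * v $ j)"
    unfolding qf_def using assms by simp
  also have "\<dots> = (\<Sum>i<a. \<Sum>j<a. cnj (v $ i) * (\<Sum>x<b. \<Sum>y<b. A $$ (i,x) * X $$ (x,y) * cnj (A $$ (j,y))) * v $ j)"
    apply (rule sum.cong[OF refl])+ apply (subst mult3_index[OF A X A]) by auto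
  also have "\<dots> = (\<Sum>i<a. \<Sum>j<a. \<Sum>x<b. \<Sum>y<b. cnj (v $ i) * A $$ (i,x) * X $$ (x,y) * cnj (A $$ (j,y)) * v $ j)"
    apply (rule sum.cong[OF refl])+ by (simp add: sum_distrib_left sum_distrib_right mult.assoc)
  also have "\<dots> = (\<Sum>x<b. \<Sum>y<b. \<Sum>i<a. \<Sum>j<a. cnj (v $ i) * A $$ (i,x) * X $$ (x,y) * cnj (A $$ (j,y)) * v $ j)"
    by (rule swap4)
  also have "\<dots> = (\<Sum>x<b. \<Sum>y<b. cnj (\<Sum>i<a. cnj (A $$ (i,x)) * v $ i) * X $$ (x,y) * (\<Sum>j<a. cnj (A $$ (j,y)) * v $ j))"
    apply (rule sum.cong[OF refl])+ by (simp add: sum_distrib_left sum_distrib_right mult_ac)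
  also have "\<dots> = qf X (vec b (\<lambda>x. \<Sum>i<a. cnj (A $$ (i,x)) * v $ i))"
    unfolding qf_def using X by simp
  finally show ?thesis .
qed

lemma psd_carrier: "psd X \<Longrightarrow> X \<in> carrier_mat (dim_row X) (dim_row X)"
  unfolding psd_def carrier_mat_def by simp

lemma adj_mult3: assumes A: "A \<in> carrier_mat a b" and X: "X \<in> carrier_mat b b" and "adj X = X"
  shows "adj (A * X * adj A) = A * X * adj A"
proof -
  have h: "\<forall>i<b. \<forall>j<b. X $$ (j,i) = cnj (X $$ (i,j))" using herm_iff[OF X, THEN iffD1, OF assms(3)] .
  have c: "A * X * adj A \<in> carrier_mat a a" using mult_carrier_mat[OF mult_carrier_mat[OF A X] adj_carrier[OF A]] .
  show ?thesis unfolding herm_iff[OF c]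
  proof (intro allI impI)
    fix i j assume ij: "i < a" "j < a"
    have "(A * X * adj A) $$ (j,i) = (\<Sum>x<b. \<Sum>y<b. A $$ (j,x) * X $$ (x,y) * cnj (A $$ (i,y)))"
      by (rule mult3_index[OF A X A]) (use ij in auto)
    also have "\<dots> = (\<Sum>y<b. \<Sum>x<b. A $$ (j,x) * X $$ (x,y) * cnj (A $$ (i,y)))" by (rule sum.swap)
    also have "\<dots> = (\<Sum>y<b. \<Sum>x<b. cnj (A $$ (i,y) * X $$ (y,x) * cnj (A $$ (j,x))))"
    proof (rule sum.cong[OF refl], rule sum.cong[OF refl])
      fix y x assume "y \<in> {..<b}" "x \<in> {..<b}"
      then have "X $$ (x,y) = cnj (X $$ (y,x))" using h[rule_format, of y x] by blast
      then show "A $$ (j,x) * X $$ (x,y) * cnj (A $$ (i,y)) = cnj (A $$ (i,y) * X $$ (y,x) * cnj (A $$ (j,x)))"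
        by (simp add: mult_ac)
    qed
    also have "\<dots> = cnj ((A * X * adj A) $$ (i,j))"
      by (subst mult3_index[OF A X A]) (use ij in auto)
    finally show "(A * X * adj A) $$ (j,i) = cnj ((A * X * adj A) $$ (i,j))" .
  qed
qed

lemma psd_congr:
  assumes "psd X" "X \<in> carrier_mat b b" "A \<in> carrier_mat a b"
  shows "psd (A * X * adj A)"
  unfolding psd_iff
proof (intro conjI ballI)
  show "dim_col (A * X * adj A) = dim_row (A * X * adj A)" using assms by simp
  show "adj (A * X * adj A) = A * X * adj A" using adj_mult3[OF assms(3,2)] assms(1) unfolding psd_def by simp
  fix v :: "complex vec" assume "v \<in> carrier_vec (dim_row (A * X * adj A))"
  then have v: "v \<in> carrier_vec a" using assms by simp
  note e = qf_congr[OF assms(3,2) v]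
  show "0 \<le> Re (qf (A * X * adj A) v)" 
    using assms(1,2) unfolding e psd_iff by auto
qed

lemma msum_carrier: "\<forall>x\<in>set xs. x \<in> carrier_mat N N \<Longrightarrow> msum N xs \<in> carrier_mat N N"
  unfolding msum_def by (induction xs) auto

lemma msum_index: "\<forall>x\<in>set xs. x \<in> carrier_mat N N \<Longrightarrow> i < N \<Longrightarrow> j < N \<Longrightarrow>
   msum N xs $$ (i,j) = sum_list (map (\<lambda>x. x $$ (i,j)) xs)"
proof (induction xs)
  case Nil then show ?case by (simp add: msum_def)
next
  case (Cons a xs)
  have "msum N (a # xs) = a + msum N xs" by (simp add: msum_def)
  moreover have "msum N xs \<in> carrier_mat N N" using Cons.prems msum_carrier by simp
  ultimately show ?case using Cons by simp
qed

lemma qf_add: assumes "A \<in> carrier_mat N N" "B \<in> carrier_mat N N"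
  shows "qf (A + B) v = qf A v + qf B v"
  using assms unfolding qf_def by (simp add: algebra_simps sum.distrib)

lemma qf_minus: assumes "A \<in> carrier_mat N N" "B \<in> carrier_mat N N"
  shows "qf (A - B) v = qf A v - qf B v"
  using assms unfolding qf_def by (simp add: algebra_simps sum_subtractf)

lemma qf_smult: assumes "A \<in> carrier_mat N N" shows "qf (c \<cdot>\<^sub>m A) v = c * qf A v"
  unfolding qf_def using assms by (auto simp: sum_distrib_left mult_ac intro!: sum.cong)

lemma qf_zero: "qf (0\<^sub>m N N) v = 0"
  unfolding qf_def by simp

lemma qf_msum: "\<forall>x\<in>set xs. x \<in> carrier_mat N N \<Longrightarrow> qf (msum N xs) v = sum_list (map (\<lambda>x. qf x v) xs)"
proof (induction xs)
  case Nil then show ?case by (simp add: msum_def qf_zero)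
next
  case (Cons a xs)
  have "msum N (a # xs) = a + msum N xs" by (simp add: msum_def)
  moreover have "msum N xs \<in> carrier_mat N N" using Cons.prems msum_carrier by simp
  ultimately show ?case using Cons qf_add[of a N "msum N xs" v] by simp
qed

lemma adj_add: "A \<in> carrier_mat a b \<Longrightarrow> B \<in> carrier_mat a b \<Longrightarrow> adj (A + B) = adj A + adj B"
  by (rule eq_matI) (auto simp: adj_def)

lemma adj_minus: "A \<in> carrier_mat a b \<Longrightarrow> B \<in> carrier_mat a b \<Longrightarrow> adj (A - B) = adj A - adj B"
  by (rule eq_matI) (auto simp: adj_def)

lemma adj_zero: "adj (0\<^sub>m a b) = 0\<^sub>m b a"
  by (rule eq_matI) (auto simp: adj_def)

lemma adj_one: "adj (1\<^sub>m a) = 1\<^sub>m a"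
  by (rule eq_matI) (auto simp: adj_def)

lemma adj_smult_real: "adj (complex_of_real r \<cdot>\<^sub>m A) = complex_of_real r \<cdot>\<^sub>m adj A"
  by (rule eq_matI) (auto simp: adj_def)

lemma adj_msum_herm: "\<forall>x\<in>set xs. x \<in> carrier_mat N N \<and> adj x = x \<Longrightarrow> adj (msum N xs) = msum N xs"
proof (induction xs)
  case Nil then show ?case by (simp add: msum_def adj_zero)
next
  case (Cons a xs)
  have "msum N (a # xs) = a + msum N xs" by (simp add: msum_def)
  moreover have "msum N xs \<in> carrier_mat N N" using Cons.prems msum_carrier by auto
  ultimately show ?case using Cons adj_add[of a N N "msum N xs"] by simp
qed

lemma psd_add: assumes "psd A" "psd B" "A \<in> carrier_mat N N" "B \<in> carrier_mat N N"
  shows "psd (A + B)"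
  unfolding psd_iff
proof (intro conjI ballI)
  show "dim_col (A + B) = dim_row (A + B)" using assms by simp
  show "adj (A + B) = A + B" using assms adj_add[of A N N B] unfolding psd_def by simp
  fix v :: "complex vec" assume "v \<in> carrier_vec (dim_row (A + B))"
  then have v: "v \<in> carrier_vec (dim_row A)" "v \<in> carrier_vec (dim_row B)" using assms by auto
  have "0 \<le> Re (qf A v)" "0 \<le> Re (qf B v)" using assms(1,2) v unfolding psd_iff by auto
  then show "0 \<le> Re (qf (A + B) v)" using qf_add[OF assms(3,4)] by simp
qed

lemma psd_zero: "psd (0\<^sub>m N N)"
  unfolding psd_iff by (simp add: adj_zero qf_zero)

lemma psd_msum: "\<forall>x\<in>set xs. x \<in> carrier_mat N N \<and> psd x \<Longrightarrow> psd (msum N xs)"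
proof (induction xs)
  case Nil then show ?case by (simp add: msum_def psd_zero)
next
  case (Cons a xs)
  have "msum N (a # xs) = a + msum N xs" by (simp add: msum_def)
  moreover have "msum N xs \<in> carrier_mat N N" using Cons.prems msum_carrier by auto
  ultimately show ?case using Cons psd_add[of a "msum N xs" N] by simp
qed

lemma psd_smult: assumes "psd A" "r \<ge> 0" shows "psd (complex_of_real r \<cdot>\<^sub>m A)"
  unfolding psd_iff
proof (intro conjI ballI)
  show "dim_col (complex_of_real r \<cdot>\<^sub>m A) = dim_row (complex_of_real r \<cdot>\<^sub>m A)" using assms unfolding psd_def by simp
  show "adj (complex_of_real r \<cdot>\<^sub>m A) = complex_of_real r \<cdot>\<^sub>m A" using assms adj_smult_real unfolding psd_def by simp
  fix v :: "complex vec" assume "v \<in> carrier_vec (dim_row (complex_of_real r \<cdot>\<^sub>m A))"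
  then have "0 \<le> Re (qf A v)" using assms(1) unfolding psd_iff by auto
  then show "0 \<le> Re (qf (complex_of_real r \<cdot>\<^sub>m A) v)" using assms(2) psd_carrier[OF assms(1)] by (simp add: qf_smult)
qed

lemma qf_one: "qf (1\<^sub>m N) v = complex_of_real (\<Sum>k<N. (cmod (v $ k))^2)"
proof -
  have "qf (1\<^sub>m N) v = (\<Sum>i<N. \<Sum>j<N. cnj (v $ i) * (if i = j then 1 else 0) * v $ j)"
    unfolding qf_def by (intro sum.cong refl) auto
  also have "\<dots> = (\<Sum>i<N. cnj (v $ i) * v $ i)"
    by (simp add: if_distrib if_distribR cong: if_cong)
  also have "\<dots> = (\<Sum>i<N. complex_of_real ((cmod (v $ i))^2))"
    by (intro sum.cong refl) (subst complex_norm_square, simp add: mult.commute)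
  finally show ?thesis by simp
qed

lemma qf_gram: assumes F: "F \<in> carrier_mat c b" and v: "v \<in> carrier_vec b"
  shows "qf (adj F * F) v = complex_of_real (\<Sum>k<c. (cmod (\<Sum>i<b. F $$ (k,i) * v $ i))^2)"
proof -
  have aF: "adj F \<in> carrier_mat b c" using F by simp
  have "adj F * F = adj F * 1\<^sub>m c * adj (adj F)" using aF by (simp add: right_mult_one_mat[OF aF])
  then have "qf (adj F * F) v = qf (1\<^sub>m c) (vec c (\<lambda>x. \<Sum>i<b. cnj (adj F $$ (i,x)) * v $ i))"
    using qf_congr[OF aF one_carrier_mat v] by simp
  also have "\<dots> = qf (1\<^sub>m c) (vec c (\<lambda>x. \<Sum>i<b. F $$ (x,i) * v $ i))"
    using F by (intro arg_cong[where f="qf (1\<^sub>m c)"]) (auto intro!: sum.cong)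
  also have "\<dots> = complex_of_real (\<Sum>k<c. (cmod (\<Sum>i<b. F $$ (k,i) * v $ i))^2)"
    unfolding qf_one by simp
  finally show ?thesis .
qed

definition omg :: complex where "omg = Complex (-1/2) (sqrt 3 / 2)"

lemma omg_sq: "omg^2 = Complex (-1/2) (- sqrt 3 / 2)"
  by (simp add: omg_def power2_eq_square complex_eq_iff field_simps)

lemma omg_cube: "omg^3 = 1"
proof -
  have "omg^3 = omg^2 * omg" by (simp add: power3_eq_cube power2_eq_square)
  also have "\<dots> = 1" unfolding omg_sq by (simp add: omg_def complex_eq_iff field_simps)
  finally show ?thesis .
qed

lemma omg_norm: "cmod omg = 1"
  by (simp add: omg_def cmod_def power2_eq_square field_simps)

lemma omg_cnj: "cnj omg = omg^2"
  unfolding omg_sq by (simp add: omg_def complex_cnj)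

lemma omg_ne1: "omg \<noteq> 1" by (simp add: omg_def complex_eq_iff)
lemma omg_sq_ne1: "omg^2 \<noteq> 1" unfolding omg_sq by (simp add: complex_eq_iff)

lemma omg_pow_mod: "omg ^ n = omg ^ (n mod 3)"
proof -
  have "omg ^ n = omg ^ (3 * (n div 3) + n mod 3)" by simp
  also have "\<dots> = omg ^ (3 * (n div 3)) * omg ^ (n mod 3)" by (rule power_add)
  also have "omg ^ (3 * (n div 3)) = 1" by (simp add: power_mult omg_cube)
  finally show ?thesis by simp
qed

lemma omg_pow_eq1: "omg ^ n = 1 \<longleftrightarrow> n mod 3 = 0"
proof -
  have "n mod 3 < 3" by simp
  then have "n mod 3 = 0 \<or> n mod 3 = 1 \<or> n mod 3 = 2" by linarith
  then show ?thesis using omg_ne1 omg_sq_ne1 by (subst omg_pow_mod) auto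
qed

lemma omg_pow_norm[simp]: "cmod (omg ^ n) = 1"
  by (simp add: norm_power omg_norm)

lemma omg_pow_cnj_mult: "cnj (omg ^ n) * omg ^ n = 1"
proof -
  have "cnj (omg ^ n) * omg ^ n = complex_of_real ((cmod (omg^n))^2)"
    by (subst complex_norm_square) (simp add: mult.commute)
  then show ?thesis by simp
qed

lemma omg_pow_cnj: "cnj (omg ^ n) = omg ^ (2*n)"
  by (simp add: omg_cnj power_mult)

definition monm :: "nat \<Rightarrow> (nat \<Rightarrow> nat) \<Rightarrow> (nat \<Rightarrow> nat) \<Rightarrow> complex mat" where
  "monm d p ph = mat d d (\<lambda>(r,s). if r = p s then omg ^ (ph s) else 0)"

lemma mono_carrier[simp]: "monm d p ph \<in> carrier_mat d d"
  by (simp add: monm_def)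

lemma monm_dims[simp]: "dim_row (monm d p ph) = d" "dim_col (monm d p ph) = d"
  by (simp_all add: monm_def)

lemma idx_lt: fixes i j n m :: nat assumes "i < n" "j < m" shows "i*m+j < n*m"
proof -
  have "i*m + j < i*m + m" using assms by simp
  also have "\<dots> = (i+1)*m" by simp
  also have "\<dots> \<le> n*m" using assms by (intro mult_right_mono) auto
  finally show ?thesis .
qed

lemma kron_carrier[simp]: "kron A B \<in> carrier_mat (dim_row A * dim_row B) (dim_col A * dim_col B)"
  by (simp add: kron_def)

lemma kron_dims[simp]: "dim_row (kron A B) = dim_row A * dim_row B" "dim_col (kron A B) = dim_col A * dim_col B"
  by (simp_all add: kron_def)

lemma kron_index:
  assumes "A \<in> carrier_mat n1 m1" "B \<in> carrier_mat n2 m2" "i < n1" "j < n2" "k < m1" "l < m2"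
  shows "kron A B $$ (i*n2+j, k*m2+l) = A $$ (i,k) * B $$ (j,l)"
  using assms by (simp add: kron_def idx_lt)

lemma U_index:
  assumes p: "p permutes {..<d}" and ab: "a < d" "b < d" and x: "x < d*d"
  shows "kron (monm d p ph) (monm d p ph) $$ (a*d+b, x) =
     (if x = inv_into UNIV p a * d + inv_into UNIV p b then omg^(ph (inv_into UNIV p a)) * omg^(ph (inv_into UNIV p b)) else 0)"
proof -
  have d: "d > 0" using ab by simp
  have x1: "x div d < d" using x by (simp add: less_mult_imp_div_less)
  have x2: "x mod d < d" using d by simp
  have r: "(a*d+b) div d = a" "(a*d+b) mod d = b" using ab by auto
  have ip: "inv_into UNIV p a < d" "inv_into UNIV p b < d" using ab p
    by (meson lessThan_iff permutes_inv permutes_in_image)+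
  have "kron (monm d p ph) (monm d p ph) $$ (a*d+b, x) = monm d p ph $$ (a, x div d) * monm d p ph $$ (b, x mod d)"
    using x idx_lt[OF ab] ab by (simp add: kron_def r)
  also have "\<dots> = (if a = p (x div d) then omg^(ph (x div d)) else 0) * (if b = p (x mod d) then omg^(ph (x mod d)) else 0)"
    using ab x1 x2 by (simp add: monm_def)
  also have "\<dots> = (if x div d = inv_into UNIV p a \<and> x mod d = inv_into UNIV p b then omg^(ph (inv_into UNIV p a)) * omg^(ph (inv_into UNIV p b)) else 0)"
    using permutes_inv_eq[OF p, of a "x div d"] permutes_inv_eq[OF p, of b "x mod d"] by auto
  also have "(x div d = inv_into UNIV p a \<and> x mod d = inv_into UNIV p b) \<longleftrightarrow> x = inv_into UNIV p a * d + inv_into UNIV p b"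
  proof -
    have "x = (x div d) * d + x mod d" by simp
    then show ?thesis using idx_eq[OF x2 ip(2), of "x div d" "inv_into UNIV p a"] by metis
  qed
  finally show ?thesis .
qed

lemma inv_perm_lt: "p permutes {..<d} \<Longrightarrow> a < d \<Longrightarrow> inv_into UNIV p a < d"
  by (meson lessThan_iff permutes_inv permutes_in_image)

lemma twirl_entry:
  assumes p: "p permutes {..<d}" and X: "X \<in> carrier_mat (d*d) (d*d)"
    and ab: "a < d" "b < d" "a' < d" "b' < d"
  shows "(kron (monm d p ph) (monm d p ph) * X * adj (kron (monm d p ph) (monm d p ph))) $$ (a*d+b, a'*d+b') =
     (omg^(ph (inv_into UNIV p a)) * omg^(ph (inv_into UNIV p b))) * X $$ (inv_into UNIV p a * d + inv_into UNIV p b, inv_into UNIV p a' * d + inv_into UNIV p b')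
       * cnj (omg^(ph (inv_into UNIV p a')) * omg^(ph (inv_into UNIV p b')))"
proof -
  let ?U = "kron (monm d p ph) (monm d p ph)"
  have U: "?U \<in> carrier_mat (d*d) (d*d)" using kron_carrier[of "monm d p ph" "monm d p ph"] by simp
  define x0 where "x0 = inv_into UNIV p a * d + inv_into UNIV p b"
  define y0 where "y0 = inv_into UNIV p a' * d + inv_into UNIV p b'"
  define c1 where "c1 = omg^(ph (inv_into UNIV p a)) * omg^(ph (inv_into UNIV p b))"
  define c2 where "c2 = omg^(ph (inv_into UNIV p a')) * omg^(ph (inv_into UNIV p b'))"
  have x0: "x0 < d*d" unfolding x0_def by (intro idx_lt inv_perm_lt[OF p] ab)
  have y0: "y0 < d*d" unfolding y0_def by (intro idx_lt inv_perm_lt[OF p] ab)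
  have r: "a*d+b < d*d" "a'*d+b' < d*d" using ab by (auto intro: idx_lt)
  have "(?U * X * adj ?U) $$ (a*d+b, a'*d+b') = (\<Sum>x<d*d. \<Sum>y<d*d. ?U $$ (a*d+b,x) * X $$ (x,y) * cnj (?U $$ (a'*d+b',y)))"
    by (rule mult3_index[OF U X U r])
  also have "\<dots> = (\<Sum>x<d*d. \<Sum>y<d*d. (if x = x0 then c1 else 0) * X $$ (x,y) * cnj (if y = y0 then c2 else 0))"
    apply (rule sum.cong[OF refl])+
    apply (subst U_index[OF p ab(1,2)], simp)
    apply (subst U_index[OF p ab(3,4)], simp)
    unfolding x0_def y0_def c1_def c2_def by (rule refl)
  also have "\<dots> = (\<Sum>x<d*d. if x = x0 then (\<Sum>y<d*d. c1 * X $$ (x,y) * cnj (if y = y0 then c2 else 0)) else 0)"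
    by (rule sum.cong[OF refl]) simp
  also have "\<dots> = (\<Sum>y<d*d. c1 * X $$ (x0,y) * cnj (if y = y0 then c2 else 0))"
    using x0 by simp
  also have "\<dots> = (\<Sum>y<d*d. if y = y0 then c1 * X $$ (x0,y) * cnj c2 else 0)"
    by (rule sum.cong[OF refl]) simp
  also have "\<dots> = c1 * X $$ (x0,y0) * cnj c2"
    using y0 by simp
  finally show ?thesis unfolding x0_def y0_def c1_def c2_def .
qed

definition IX :: "nat \<Rightarrow> ((nat \<Rightarrow> nat) \<times> (nat \<Rightarrow> nat)) set" where
  "IX d = {p. p permutes {..<d}} \<times> PiE {..<d} (\<lambda>_. {..<3::nat})"

definition Tent :: "nat \<Rightarrow> complex mat \<Rightarrow> nat \<Rightarrow> nat \<Rightarrow> complex" where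
  "Tent d X r t = (\<Sum>(p,ph)\<in>IX d. (kron (monm d p ph) (monm d p ph) * X * adj (kron (monm d p ph) (monm d p ph))) $$ (r,t))"

definition hmap :: "nat \<Rightarrow> (nat \<Rightarrow> nat) \<Rightarrow> (nat \<Rightarrow> nat) \<Rightarrow> (nat \<Rightarrow> nat) \<times> (nat \<Rightarrow> nat) \<Rightarrow> (nat \<Rightarrow> nat) \<times> (nat \<Rightarrow> nat)" where
  "hmap d q ps = (\<lambda>(p,ph). (q \<circ> p, \<lambda>s. if s < d then (ps (p s) + ph s) mod 3 else undefined))"

lemma IX_finite: "finite (IX d)"
  unfolding IX_def by (intro finite_cartesian_product finite_permutations finite_PiE) auto

lemma IX_mem: "(p,ph) \<in> IX d \<longleftrightarrow> p permutes {..<d} \<and> (\<forall>s<d. ph s < 3) \<and> (\<forall>s. s \<ge> d \<longrightarrow> ph s = undefined)"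
  unfolding IX_def by (auto simp: PiE_iff extensional_def)

lemma IX_nonempty: "(id, \<lambda>s. if s < d then 0 else undefined) \<in> IX d"
  unfolding IX_mem by (auto simp: permutes_id)

lemma mod3_cancel: "u < 3 \<Longrightarrow> v < 3 \<Longrightarrow> (x + u) mod 3 = (x + v) mod 3 \<Longrightarrow> u = (v::nat)"
  by presburger

lemma hmap_bij: assumes q: "q permutes {..<d}" shows "bij_betw (hmap d q ps) (IX d) (IX d)"
proof -
  have into: "hmap d q ps ` IX d \<subseteq> IX d"
  proof
    fix y assume "y \<in> hmap d q ps ` IX d"
    then obtain p ph where pp: "(p,ph) \<in> IX d" and y: "y = hmap d q ps (p,ph)" by auto
    have "q \<circ> p permutes {..<d}" using pp q unfolding IX_mem by (auto intro: permutes_compose)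
    then show "y \<in> IX d" unfolding y by (simp add: hmap_def IX_mem)
  qed
  have inj: "inj_on (hmap d q ps) (IX d)"
  proof (rule inj_onI)
    fix x y assume x: "x \<in> IX d" and y: "y \<in> IX d" and e: "hmap d q ps x = hmap d q ps y"
    obtain p ph where xx: "x = (p,ph)" by (cases x)
    obtain p' ph' where yy: "y = (p',ph')" by (cases y)
    have e1: "q \<circ> p = q \<circ> p'" using e unfolding xx yy hmap_def by simp
    have pp: "p = p'"
    proof
      fix s have "q (p s) = q (p' s)" using e1 by (metis comp_apply)
      then show "p s = p' s" using permutes_inj[OF q] by (meson injD)
    qed
    have e2: "\<And>s. s < d \<Longrightarrow> (ps (p s) + ph s) mod 3 = (ps (p s) + ph' s) mod 3"
    proof -
      fix s assume s: "s < d"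
      have ef: "(\<lambda>s. if s < d then (ps (p s) + ph s) mod 3 else undefined) = (\<lambda>s. if s < d then (ps (p' s) + ph' s) mod 3 else undefined)"
        using e unfolding xx yy hmap_def by simp
      have "(\<lambda>s. if s < d then (ps (p s) + ph s) mod 3 else undefined) s = (\<lambda>s. if s < d then (ps (p' s) + ph' s) mod 3 else undefined) s"
        using ef by (rule fun_cong)
      then show "(ps (p s) + ph s) mod 3 = (ps (p s) + ph' s) mod 3" using s pp by simp
    qed
    have "ph = ph'"
    proof
      fix s show "ph s = ph' s"
      proof (cases "s < d")
        case True
        have "ph s < 3" "ph' s < 3" using x y True unfolding xx yy IX_mem by auto
        moreover have "(ps (p s) + ph s) mod 3 = (ps (p s) + ph' s) mod 3" using e2 True .
        ultimately show ?thesis using mod3_cancel by blast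
      next
        case False
        then show ?thesis using x y unfolding xx yy IX_mem by auto
      qed
    qed
    then show "x = y" using pp xx yy by simp
  qed
  have "hmap d q ps ` IX d = IX d" using endo_inj_surj[OF IX_finite into inj] .
  then show ?thesis using inj unfolding bij_betw_def by simp
qed

lemma omg_mod_add: "omg ^ ((x + y) mod 3) = omg ^ x * omg ^ y"
  by (metis omg_pow_mod power_add)

lemma inv_comp_perm: assumes "p permutes S" "q permutes S"
  shows "inv_into UNIV (q \<circ> p) = inv_into UNIV p \<circ> inv_into UNIV q"
  using o_inv_distrib[OF permutes_bij[OF assms(2)] permutes_bij[OF assms(1)]] .

lemma Tent_inv:
  assumes q: "q permutes {..<d}" and X: "X \<in> carrier_mat (d*d) (d*d)"
    and ab: "a < d" "b < d" "a' < d" "b' < d"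
  shows "Tent d X (a*d+b) (a'*d+b') =
    (omg^(ps (inv_into UNIV q a)) * omg^(ps (inv_into UNIV q b))) *
     Tent d X (inv_into UNIV q a * d + inv_into UNIV q b) (inv_into UNIV q a' * d + inv_into UNIV q b')
    * cnj (omg^(ps (inv_into UNIV q a')) * omg^(ps (inv_into UNIV q b')))"
proof -
  define iq where "iq = inv_into UNIV q"
  have iqlt: "iq a < d" "iq b < d" "iq a' < d" "iq b' < d"
    unfolding iq_def using ab by (auto intro: inv_perm_lt[OF q])
  define c1 where "c1 = omg^(ps (iq a)) * omg^(ps (iq b))"
  define c2 where "c2 = omg^(ps (iq a')) * omg^(ps (iq b'))"
  define F where "F = (\<lambda>(p,ph) r t. (kron (monm d p ph) (monm d p ph) * X * adj (kron (monm d p ph) (monm d p ph))) $$ (r,t))"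
  have T: "\<And>r t. Tent d X r t = (\<Sum>x\<in>IX d. F x r t)"
    unfolding Tent_def F_def by (intro sum.cong refl) auto
  have key: "F (hmap d q ps x) (a*d+b) (a'*d+b') = c1 * F x (iq a * d + iq b) (iq a' * d + iq b') * cnj c2"
    if x: "x \<in> IX d" for x
  proof -
    obtain p ph where xx: "x = (p,ph)" by (cases x)
    have p: "p permutes {..<d}" and phlt: "\<And>s. s < d \<Longrightarrow> ph s < 3" using x unfolding xx IX_mem by auto
    have qp: "q \<circ> p permutes {..<d}" using permutes_compose[OF p q] .
    define ph' where "ph' = (\<lambda>s. if s < d then (ps (p s) + ph s) mod 3 else undefined)"
    have hm: "hmap d q ps x = (q \<circ> p, ph')" unfolding xx hmap_def ph'_def by simp
    have ic: "inv_into UNIV (q \<circ> p) = inv_into UNIV p \<circ> iq" unfolding iq_def by (rule inv_comp_perm[OF p q])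
    have ph': "\<And>z. z < d \<Longrightarrow> omg ^ ph' (inv_into UNIV p (iq z)) = omg ^ ps (iq z) * omg ^ ph (inv_into UNIV p (iq z))"
    proof -
      fix z assume z: "z < d"
      have iz: "iq z < d" unfolding iq_def using z by (rule inv_perm_lt[OF q])
      have lt: "inv_into UNIV p (iq z) < d" using inv_perm_lt[OF p iz] .
      have "p (inv_into UNIV p (iq z)) = iq z" using permutes_inverses(1)[OF p] .
      then show "omg ^ ph' (inv_into UNIV p (iq z)) = omg ^ ps (iq z) * omg ^ ph (inv_into UNIV p (iq z))"
        unfolding ph'_def using lt omg_mod_add by simp
    qed
    have "F (hmap d q ps x) (a*d+b) (a'*d+b') =
       (omg^(ph' (inv_into UNIV (q \<circ> p) a)) * omg^(ph' (inv_into UNIV (q \<circ> p) b))) *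
        X $$ (inv_into UNIV (q \<circ> p) a * d + inv_into UNIV (q \<circ> p) b, inv_into UNIV (q \<circ> p) a' * d + inv_into UNIV (q \<circ> p) b')
       * cnj (omg^(ph' (inv_into UNIV (q \<circ> p) a')) * omg^(ph' (inv_into UNIV (q \<circ> p) b')))"
      unfolding hm F_def by (simp add: twirl_entry[OF qp X ab])
    also have "\<dots> = c1 * ((omg^(ph (inv_into UNIV p (iq a))) * omg^(ph (inv_into UNIV p (iq b)))) *
        X $$ (inv_into UNIV p (iq a) * d + inv_into UNIV p (iq b), inv_into UNIV p (iq a') * d + inv_into UNIV p (iq b'))
       * cnj (omg^(ph (inv_into UNIV p (iq a'))) * omg^(ph (inv_into UNIV p (iq b'))))) * cnj c2"
      unfolding ic c1_def c2_def using ph' ab by (simp add: mult_ac)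
    also have "\<dots> = c1 * F x (iq a * d + iq b) (iq a' * d + iq b') * cnj c2"
      unfolding xx F_def by (simp add: twirl_entry[OF p X iqlt])
    finally show ?thesis .
  qed
  have "Tent d X (a*d+b) (a'*d+b') = (\<Sum>x\<in>IX d. F (hmap d q ps x) (a*d+b) (a'*d+b'))"
    unfolding T using sum.reindex_bij_betw[OF hmap_bij[OF q, of ps], of "\<lambda>x. F x (a*d+b) (a'*d+b')"] by simp
  also have "\<dots> = (\<Sum>x\<in>IX d. c1 * F x (iq a * d + iq b) (iq a' * d + iq b') * cnj c2)"
    using key by (rule sum.cong[OF refl])
  also have "\<dots> = c1 * Tent d X (iq a * d + iq b) (iq a' * d + iq b') * cnj c2"
    unfolding T by (simp add: sum_distrib_left sum_distrib_right)
  finally show ?thesis unfolding c1_def c2_def iq_def .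
qed

lemma Tent_phi:
  assumes X: "X \<in> carrier_mat (d*d) (d*d)"
  shows "(\<Sum>k<d. \<Sum>l<d. Tent d X (k*d+l) (l*d+k)) = of_nat (card (IX d)) * (\<Sum>k<d. \<Sum>l<d. X $$ (k*d+l, l*d+k))"
proof -
  define F where "F = (\<lambda>(p,ph) r t. (kron (monm d p ph) (monm d p ph) * X * adj (kron (monm d p ph) (monm d p ph))) $$ (r,t))"
  have T: "\<And>r t. Tent d X r t = (\<Sum>x\<in>IX d. F x r t)"
    unfolding Tent_def F_def by (intro sum.cong refl) auto
  have key: "(\<Sum>k<d. \<Sum>l<d. F x (k*d+l) (l*d+k)) = (\<Sum>k<d. \<Sum>l<d. X $$ (k*d+l, l*d+k))" if x: "x \<in> IX d" for x
  proof -
    obtain p ph where xx: "x = (p,ph)" by (cases x)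
    have p: "p permutes {..<d}" using x unfolding xx IX_mem by auto
    define ip where "ip = inv_into UNIV p"
    have ipp: "ip permutes {..<d}" unfolding ip_def using permutes_inv[OF p] .
    have "(\<Sum>k<d. \<Sum>l<d. F x (k*d+l) (l*d+k)) = (\<Sum>k<d. \<Sum>l<d. X $$ (ip k * d + ip l, ip l * d + ip k))"
    proof (intro sum.cong refl)
      fix k l assume "k \<in> {..<d}" "l \<in> {..<d}"
      then have kl: "k < d" "l < d" by auto
      have "F x (k*d+l) (l*d+k) = (omg^(ph (ip k)) * omg^(ph (ip l))) * X $$ (ip k * d + ip l, ip l * d + ip k)
         * cnj (omg^(ph (ip l)) * omg^(ph (ip k)))"
        unfolding xx F_def ip_def by (simp add: twirl_entry[OF p X kl kl(2,1)])
      also have "\<dots> = (cnj (omg^(ph (ip k))) * omg^(ph (ip k))) * (cnj (omg^(ph (ip l))) * omg^(ph (ip l))) * X $$ (ip k * d + ip l, ip l * d + ip k)"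
        by (simp add: mult_ac)
      also have "\<dots> = X $$ (ip k * d + ip l, ip l * d + ip k)" by (simp only: omg_pow_cnj_mult mult_1_left)
      finally show "F x (k*d+l) (l*d+k) = X $$ (ip k * d + ip l, ip l * d + ip k)" .
    qed
    also have "\<dots> = (\<Sum>k<d. \<Sum>l<d. X $$ (ip k * d + l, l * d + ip k))"
      apply (rule sum.cong[OF refl])
      subgoal for k using sum.permute[OF ipp, of "\<lambda>l. X $$ (ip k * d + l, l * d + ip k)"] by (simp add: comp_def)
      done
    also have "\<dots> = (\<Sum>k<d. \<Sum>l<d. X $$ (k * d + l, l * d + k))"
      using sum.permute[OF ipp, of "\<lambda>k. \<Sum>l<d. X $$ (k * d + l, l * d + k)"] by (simp add: comp_def)
    finally show ?thesis .
  qed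
  have "(\<Sum>k<d. \<Sum>l<d. Tent d X (k*d+l) (l*d+k)) = (\<Sum>x\<in>IX d. \<Sum>k<d. \<Sum>l<d. F x (k*d+l) (l*d+k))"
    unfolding T by (simp add: sum.swap[of _ "IX d"])
  also have "\<dots> = (\<Sum>x\<in>IX d. \<Sum>k<d. \<Sum>l<d. X $$ (k*d+l, l*d+k))"
    using key by (rule sum.cong[OF refl])
  also have "\<dots> = of_nat (card (IX d)) * (\<Sum>k<d. \<Sum>l<d. X $$ (k*d+l, l*d+k))" by simp
  finally show ?thesis .
qed

lemma Tent_perm:
  assumes q: "q permutes {..<d}" and X: "X \<in> carrier_mat (d*d) (d*d)"
    and ab: "a < d" "b < d" "a' < d" "b' < d"
  shows "Tent d X (q a * d + q b) (q a' * d + q b') = Tent d X (a*d+b) (a'*d+b')"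
proof -
  have lt: "q a < d" "q b < d" "q a' < d" "q b' < d" using ab permutes_in_image[OF q] by auto
  show ?thesis using Tent_inv[OF q X lt, of "\<lambda>_. 0"] by (simp add: permutes_inverses(2)[OF q])
qed

lemma cnt_differ:
  assumes "\<not> ((a' = a \<and> b' = b) \<or> (a' = b \<and> b' = a))"
  shows "\<exists>x\<in>{a,b}. (if a = x then 1 else 0) + (if b = x then 1 else 0) \<noteq>
            (if a' = x then 1 else (0::nat)) + (if b' = x then 1 else 0)"
  using assms by auto

lemma Tent_zero:
  assumes X: "X \<in> carrier_mat (d*d) (d*d)"
    and ab: "a < d" "b < d" "a' < d" "b' < d"
    and ne: "\<not> ((a' = a \<and> b' = b) \<or> (a' = b \<and> b' = a))"
  shows "Tent d X (a*d+b) (a'*d+b') = 0"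
proof -
  obtain x where x: "x \<in> {a,b}" and
    c: "(if a = x then 1 else 0) + (if b = x then 1 else 0) \<noteq> (if a' = x then 1 else (0::nat)) + (if b' = x then 1 else 0)"
    using cnt_differ[OF ne] by blast
  define ps where "ps = (\<lambda>s::nat. if s = x then 1 else (0::nat))"
  define c1 where "c1 = ps a + ps b"
  define c2 where "c2 = ps a' + ps b'"
  have c12: "c1 \<noteq> c2" "c1 \<le> 2" "c2 \<le> 2" using c unfolding c1_def c2_def ps_def by (auto split: if_splits)
  have "(c1 + 2 * c2) mod 3 \<noteq> 0" using c12 by presburger
  then have f: "omg ^ (c1 + 2 * c2) \<noteq> 1" using omg_pow_eq1 by simp
  have "Tent d X (a*d+b) (a'*d+b') = (omg^(ps a) * omg^(ps b)) * Tent d X (a*d+b) (a'*d+b') * cnj (omg^(ps a') * omg^(ps b'))"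
    using Tent_inv[OF permutes_id X ab, of ps] by (simp add: inv_id)
  also have "\<dots> = omg ^ (c1 + 2 * c2) * Tent d X (a*d+b) (a'*d+b')"
  proof -
    have e1: "cnj (omg^(ps a') * omg^(ps b')) = omg^(2*c2)" unfolding c2_def
      by (simp only: complex_cnj_mult omg_pow_cnj power_add[symmetric] distrib_left)
    have e2: "omg^(ps a) * omg^(ps b) = omg^c1" unfolding c1_def by (simp only: power_add)
    show ?thesis unfolding e1 e2 by (simp add: power_add mult_ac)
  qed
  finally have "(1 - omg ^ (c1 + 2 * c2)) * Tent d X (a*d+b) (a'*d+b') = 0" by (simp add: algebra_simps)
  then show ?thesis using f by simp
qed

lemma ket2_index: "r < d*d \<Longrightarrow> ket2 d k l $ r = (if r = k*d+l then 1 else 0)"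
  unfolding ket2_def unit_vec_def by simp

lemma ket2_dim[simp]: "dim_vec (ket2 d k l) = d*d" by (simp add: ket2_def)

lemma proj_index: "r < dim_vec v \<Longrightarrow> t < dim_vec v \<Longrightarrow> proj v $$ (r,t) = v $ r * cnj (v $ t)"
  by (simp add: proj_def)

lemma psi_dim[simp]: "dim_vec (psi s d k l) = d*d" by (simp add: psi_def)

lemma psi_index: "r < d*d \<Longrightarrow> psi s d k l $ r =
    complex_of_real (1 / sqrt 2) * ((if r = k*d+l then 1 else 0) + s * (if r = l*d+k then 1 else 0))"
  by (simp add: psi_def ket2_index)

lemma proj_psi_index:
  assumes "r < d*d" "t < d*d" "cnj s = s"
  shows "proj (psi s d k l) $$ (r,t) = (1/2) * ((if r = k*d+l then 1 else 0) + s * (if r = l*d+k then 1 else 0))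
      * ((if t = k*d+l then 1 else 0) + s * (if t = l*d+k then 1 else 0))"
proof -
  have h0: "1 / sqrt 2 * (1 / sqrt 2) = (1/2::real)" by (simp add: divide_simps)
  have h: "complex_of_real (1 / sqrt 2) * cnj (complex_of_real (1 / sqrt 2)) = 1/2"
    unfolding complex_cnj_complex_of_real of_real_mult[symmetric] h0 by simp
  have "proj (psi s d k l) $$ (r,t) = complex_of_real (1 / sqrt 2) * cnj (complex_of_real (1 / sqrt 2)) *
      (((if r = k*d+l then 1 else 0) + s * (if r = l*d+k then 1 else 0))
      * cnj ((if t = k*d+l then 1 else 0) + s * (if t = l*d+k then 1 else 0)))"
    using assms by (simp add: proj_index psi_index mult_ac)
  also have "cnj ((if t = k*d+l then 1 else 0) + s * (if t = l*d+k then 1 else 0)) = ((if t = k*d+l then 1 else 0) + s * (if t = l*d+k then 1 else 0))"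
    using assms(3) by simp
  finally show ?thesis unfolding h by simp
qed

lemma sum_diag_part:
  assumes ij: "i < d" "j < d" "i' < d" "j' < d"
  shows "(\<Sum>k<d. proj (ket2 d k k) $$ (i*d+j, i'*d+j')) = (if i = j \<and> i' = i \<and> j' = i then 1 else 0)"
proof -
  have r: "i*d+j < d*d" "i'*d+j' < d*d" using ij by (auto intro: idx_lt)
  have "(\<Sum>k<d. proj (ket2 d k k) $$ (i*d+j, i'*d+j')) = (\<Sum>k<d. if k = i then (if i = j \<and> i' = i \<and> j' = i then 1 else 0) else 0)"
  proof (rule sum.cong[OF refl])
    fix k assume k: "k \<in> {..<d}"
    have "proj (ket2 d k k) $$ (i*d+j, i'*d+j') = (if i*d+j = k*d+k then 1 else 0) * (if i'*d+j' = k*d+k then 1 else 0)"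
      using r by (simp add: proj_index ket2_index)
    also have "\<dots> = (if k = i then (if i = j \<and> i' = i \<and> j' = i then 1 else 0) else 0)"
      using idx_eq[OF ij(2), of k i k] idx_eq[OF ij(4), of k i' k] k by auto
    finally show "proj (ket2 d k k) $$ (i*d+j, i'*d+j') = (if k = i then (if i = j \<and> i' = i \<and> j' = i then 1 else 0) else 0)" .
  qed
  also have "\<dots> = (if i = j \<and> i' = i \<and> j' = i then 1 else 0)" using ij by simp
  finally show ?thesis .
qed

lemma sum_pair_part:
  assumes ij: "i < d" "j < d" "i' < d" "j' < d" and s: "cnj s = s" "s * s = 1"
  shows "(\<Sum>(k,l)\<in>{(k,l). k < l \<and> l < d}. proj (psi s d k l) $$ (i*d+j, i'*d+j')) =
     (if i = j then 0 else (1/2) * ((if i' = i \<and> j' = j then 1 else 0) + s * (if i' = j \<and> j' = i then 1 else 0)))"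
proof -
  have r: "i*d+j < d*d" "i'*d+j' < d*d" using ij by (auto intro: idx_lt)
  define P where "P = {(k,l). k < l \<and> l < d}"
  define e where "e = (\<lambda>k l. (if i'*d+j' = k*d+l then 1 else (0::complex)))"
  have e: "\<And>k l. k < d \<Longrightarrow> l < d \<Longrightarrow> e k l = (if i' = k \<and> j' = l then 1 else 0)"
    unfolding e_def using idx_eq[OF ij(4)] by auto
  have tm: "proj (psi s d k l) $$ (i*d+j, i'*d+j') =
     (if (k,l) = (min i j, max i j) \<and> i \<noteq> j then (1/2) * ((if i' = i \<and> j' = j then 1 else 0) + s * (if i' = j \<and> j' = i then 1 else 0)) else 0)"
    if kl: "(k,l) \<in> P" for k l
  proof -
    have kl': "k < l" "l < d" "k < d" using kl unfolding P_def by auto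
    have "proj (psi s d k l) $$ (i*d+j, i'*d+j') = (1/2) * ((if i*d+j = k*d+l then 1 else 0) + s * (if i*d+j = l*d+k then 1 else 0))
      * (e k l + s * e l k)"
      unfolding e_def using proj_psi_index[OF r s(1)] by simp
    also have "\<dots> = (1/2) * ((if i = k \<and> j = l then 1 else 0) + s * (if i = l \<and> j = k then 1 else 0)) * (e k l + s * e l k)"
      using idx_eq[OF ij(2) kl'(2), of i k] idx_eq[OF ij(2) kl'(3), of i l] by simp
    also have "\<dots> = (if (k,l) = (min i j, max i j) \<and> i \<noteq> j then (1/2) * ((if i' = i \<and> j' = j then 1 else 0) + s * (if i' = j \<and> j' = i then 1 else 0)) else 0)"
    proof -
      have ekl: "e k l = (if i' = k \<and> j' = l then 1 else 0)" "e l k = (if i' = l \<and> j' = k then 1 else 0)"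
        using e kl' by auto
      consider (lt) "i < j" | (eq) "i = j" | (gt) "j < i" by linarith
      then show ?thesis
      proof cases
        case lt
        have z: "(if i = l \<and> j = k then 1 else 0) = (0::complex)" using lt kl' by auto
        show ?thesis
        proof (cases "k = i \<and> l = j")
          case True
          then show ?thesis using lt z unfolding ekl by (simp add: min_def max_def)
        next
          case False
          have c1: "\<not> (i = k \<and> j = l)" "\<not> (i = l \<and> j = k)" using False lt kl' by auto
          have c3: "\<not> ((k,l) = (min i j, max i j) \<and> i \<noteq> j)" using False lt by (simp add: min_def max_def)
          show ?thesis by (simp only: if_not_P[OF c1(1)] if_not_P[OF c1(2)] if_not_P[OF c3]) simp
        qed
      next
        case eq
        have z: "(if i = l \<and> j = k then 1 else 0) = (0::complex)" "(if i = k \<and> j = l then 1 else 0) = (0::complex)"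
          using eq kl' by auto
        show ?thesis using eq z by simp
      next
        case gt
        have z: "(if i = k \<and> j = l then 1 else 0) = (0::complex)" using gt kl' by auto
        show ?thesis
        proof (cases "k = j \<and> l = i")
          case True
          have "(1/2) * (0 + s * 1) * (e k l + s * e l k) = (1/2) * (s * e j i + (s * s) * e i j)"
            using True by (simp only: add_0_left mult_1_right distrib_left mult.assoc)
          also have "\<dots> = (1/2) * ((if i' = i \<and> j' = j then 1 else 0) + s * (if i' = j \<and> j' = i then 1 else 0))"
            using True ekl s(2) by (simp add: algebra_simps)
          finally show ?thesis using gt z True by (simp add: min_def max_def)
        next
          case False
          have c1: "\<not> (i = k \<and> j = l)" "\<not> (i = l \<and> j = k)" using False gt kl' by auto
          have c3: "\<not> ((k,l) = (min i j, max i j) \<and> i \<noteq> j)" using False gt by (simp add: min_def max_def)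
          show ?thesis by (simp only: if_not_P[OF c1(1)] if_not_P[OF c1(2)] if_not_P[OF c3]) simp
        qed
      qed
    qed
    finally show ?thesis .
  qed
  have "(\<Sum>(k,l)\<in>P. proj (psi s d k l) $$ (i*d+j, i'*d+j')) =
      (\<Sum>x\<in>P. if x = (min i j, max i j) \<and> i \<noteq> j then (1/2) * ((if i' = i \<and> j' = j then 1 else 0) + s * (if i' = j \<and> j' = i then 1 else 0)) else 0)"
  proof (rule sum.cong[OF refl])
    fix x assume "x \<in> P"
    then obtain k l where x: "x = (k,l)" "(k,l) \<in> P" by (cases x) auto
    show "(case x of (k,l) \<Rightarrow> proj (psi s d k l) $$ (i*d+j, i'*d+j')) = (if x = (min i j, max i j) \<and> i \<noteq> j then (1/2) * ((if i' = i \<and> j' = j then 1 else 0) + s * (if i' = j \<and> j' = i then 1 else 0)) else 0)"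
      unfolding x(1) using tm[OF x(2)] by (simp only: case_prod_conv)
  qed
  also have "\<dots> = (if i = j then 0 else (1/2) * ((if i' = i \<and> j' = j then 1 else 0) + s * (if i' = j \<and> j' = i then 1 else 0)))"
  proof (cases "i = j")
    case True then show ?thesis by simp
  next
    case False
    have fin: "finite P" unfolding P_def by (rule finite_subset[of _ "{..<d} \<times> {..<d}"]) auto
    have mem: "(min i j, max i j) \<in> P" using False ij unfolding P_def by (auto simp: min_def max_def)
    show ?thesis using False fin mem by (simp add: sum.delta')
  qed
  finally show ?thesis unfolding P_def .
qed

lemma rho_bc_entry:
  assumes ij: "i < d" "j < d" "i' < d" "j' < d"
  shows "rho_bc d a b c $$ (i*d+j, i'*d+j') =
    (if i = j then (if i' = i \<and> j' = i then complex_of_real a else 0)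
     else if i' = i \<and> j' = j then complex_of_real ((b+c)/2)
     else if i' = j \<and> j' = i then complex_of_real ((c-b)/2) else 0)"
proof -
  have r: "i*d+j < d*d" "i'*d+j' < d*d" using ij by (auto intro: idx_lt)
  have "rho_bc d a b c $$ (i*d+j, i'*d+j') = complex_of_real a * (if i = j \<and> i' = i \<and> j' = i then 1 else 0)
     + complex_of_real b * (if i = j then 0 else (1/2) * ((if i' = i \<and> j' = j then 1 else 0) + (-1) * (if i' = j \<and> j' = i then 1 else 0)))
     + complex_of_real c * (if i = j then 0 else (1/2) * ((if i' = i \<and> j' = j then 1 else 0) + 1 * (if i' = j \<and> j' = i then 1 else 0)))"
    unfolding rho_bc_def using r
    by (simp only: index_mat split sum_diag_part[OF ij] sum_pair_part[OF ij, of "-1"] sum_pair_part[OF ij, of 1]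
        complex_cnj_one complex_cnj_minus mult_1 mult_minus_left mult_minus_right minus_minus)
  also have "\<dots> = (if i = j then (if i' = i \<and> j' = i then complex_of_real a else 0)
     else if i' = i \<and> j' = j then complex_of_real ((b+c)/2)
     else if i' = j \<and> j' = i then complex_of_real ((c-b)/2) else 0)"
    by (auto simp: field_simps)
  finally show ?thesis .
qed

lemma kron_mult:
  assumes A: "A \<in> carrier_mat a1 b1" and B: "B \<in> carrier_mat a2 b2"
    and C: "C \<in> carrier_mat b1 c1" and D: "D \<in> carrier_mat b2 c2"
  shows "kron (A * C) (B * D) = kron A B * kron C D"
proof (rule eq_matI)
  show "dim_row (kron (A * C) (B * D)) = dim_row (kron A B * kron C D)" using A B by simp
  show "dim_col (kron (A * C) (B * D)) = dim_col (kron A B * kron C D)" using C D by simp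
  fix r s assume "r < dim_row (kron A B * kron C D)" "s < dim_col (kron A B * kron C D)"
  then have rs: "r < a1 * a2" "s < c1 * c2" using A B C D by auto
  then have a2: "a2 > 0" and c2: "c2 > 0" by (auto intro!: Nat.gr0I)
  define i j k l where "i = r div a2" "j = r mod a2" "k = s div c2" "l = s mod c2"
  have ij: "i < a1" "j < a2" "k < c1" "l < c2" "r = i * a2 + j" "s = k * c2 + l"
    using rs a2 c2 unfolding i_j_k_l_def by (auto simp: less_mult_imp_div_less)
  have "kron (A * C) (B * D) $$ (r,s) = (A * C) $$ (i,k) * (B * D) $$ (j,l)"
    unfolding ij(5,6) using A B C D ij by (intro kron_index) auto
  also have "\<dots> = (\<Sum>x<b1. A $$ (i,x) * C $$ (x,k)) * (\<Sum>y<b2. B $$ (j,y) * D $$ (y,l))"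
    using A B C D ij by (simp add: scalar_prod_def atLeast0LessThan)
  also have "\<dots> = (\<Sum>x<b1. \<Sum>y<b2. (A $$ (i,x) * B $$ (j,y)) * (C $$ (x,k) * D $$ (y,l)))"
    unfolding sum_product by (intro sum.cong refl) (simp add: mult_ac)
  also have "\<dots> = (\<Sum>x<b1. \<Sum>y<b2. kron A B $$ (i*a2+j, x*b2+y) * kron C D $$ (x*b2+y, k*c2+l))"
    using A B C D ij by (intro sum.cong refl) (simp add: kron_index)
  also have "\<dots> = (\<Sum>z<b1*b2. kron A B $$ (i*a2+j, z) * kron C D $$ (z, k*c2+l))"
    by (rule sum_split[symmetric])
  also have "\<dots> = (kron A B * kron C D) $$ (r,s)"
    using A B C D ij rs by (simp add: scalar_prod_def atLeast0LessThan)
  finally show "kron (A * C) (B * D) $$ (r,s) = (kron A B * kron C D) $$ (r,s)" .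
qed

lemma adj_mult:
  assumes A: "A \<in> carrier_mat a b" and B: "B \<in> carrier_mat b c"
  shows "adj (A * B) = adj B * adj A"
proof (rule eq_matI)
  fix i j assume "i < dim_row (adj B * adj A)" "j < dim_col (adj B * adj A)"
  then have ij: "i < c" "j < a" using A B by auto
  show "adj (A * B) $$ (i,j) = (adj B * adj A) $$ (i,j)"
    using A B ij by (simp add: scalar_prod_def mult.commute)
qed (use A B in auto)

lemma real_cs:
  fixes a b :: "nat \<Rightarrow> real"
  shows "(\<Sum>i<n. a i * b i)^2 \<le> (\<Sum>i<n. (a i)^2) * (\<Sum>i<n. (b i)^2)"
proof (cases "(\<Sum>i<n. (b i)^2) = 0")
  case True
  then have "\<forall>i<n. b i = 0" by (simp add: sum_nonneg_eq_0_iff)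
  then show ?thesis by simp
next
  case False
  have pos: "(\<Sum>i<n. (b i)^2) > 0" using False by (simp add: sum_nonneg order_neq_le_trans)
  define r where "r = (\<Sum>i<n. a i * b i) / (\<Sum>i<n. (b i)^2)"
  have "0 \<le> (\<Sum>i<n. (a i - r * b i)^2)" by (simp add: sum_nonneg)
  also have "\<dots> = (\<Sum>i<n. (a i)^2) - 2 * r * (\<Sum>i<n. a i * b i) + r^2 * (\<Sum>i<n. (b i)^2)"
    by (simp add: algebra_simps power2_eq_square sum_distrib_left flip: sum.distrib)
  also have "\<dots> = (\<Sum>i<n. (a i)^2) - (\<Sum>i<n. a i * b i)^2 / (\<Sum>i<n. (b i)^2)"
    using pos by (simp add: r_def power2_eq_square field_simps)
  finally show ?thesis using pos by (simp add: field_simps)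
qed

lemma complex_cs:
  fixes f g :: "nat \<Rightarrow> complex"
  shows "(cmod (\<Sum>i<n. f i * g i))^2 \<le> (\<Sum>i<n. (cmod (f i))^2) * (\<Sum>i<n. (cmod (g i))^2)"
proof -
  have "cmod (\<Sum>i<n. f i * g i) \<le> (\<Sum>i<n. cmod (f i) * cmod (g i))"
    by (rule order_trans[OF norm_sum]) (simp add: norm_mult)
  then have "(cmod (\<Sum>i<n. f i * g i))^2 \<le> (\<Sum>i<n. cmod (f i) * cmod (g i))^2"
    by (simp add: power_mono)
  also have "\<dots> \<le> (\<Sum>i<n. (cmod (f i))^2) * (\<Sum>i<n. (cmod (g i))^2)" by (rule real_cs)
  finally show ?thesis .
qed

definition frob :: "complex mat \<Rightarrow> real" where
  "frob F = (\<Sum>k<dim_row F. \<Sum>i<dim_col F. (cmod (F $$ (k,i)))^2)"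

definition vn2 :: "nat \<Rightarrow> complex vec \<Rightarrow> real" where
  "vn2 b v = (\<Sum>i<b. (cmod (v $ i))^2)"

definition appn :: "complex mat \<Rightarrow> complex vec \<Rightarrow> real" where
  "appn F v = (\<Sum>k<dim_row F. (cmod (\<Sum>i<dim_col F. F $$ (k,i) * v $ i))^2)"

lemma appn_le: "appn F v \<le> frob F * vn2 (dim_col F) v"
proof -
  have "appn F v \<le> (\<Sum>k<dim_row F. (\<Sum>i<dim_col F. (cmod (F $$ (k,i)))^2) * vn2 (dim_col F) v)"
    unfolding appn_def vn2_def by (intro sum_mono complex_cs)
  also have "\<dots> = frob F * vn2 (dim_col F) v" unfolding frob_def by (simp add: sum_distrib_right)
  finally show ?thesis .
qed

lemma monm_mult_index:
  assumes p: "p permutes {..<d}" and F: "F \<in> carrier_mat d b" and k: "k < d" and i: "i < b"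
  shows "(monm d p ph * F) $$ (k,i) = omg ^ (ph (inv_into UNIV p k)) * F $$ (inv_into UNIV p k, i)"
proof -
  have ik: "inv_into UNIV p k < d" using inv_perm_lt[OF p k] .
  have "(monm d p ph * F) $$ (k,i) = (\<Sum>j<d. (if k = p j then omg ^ (ph j) else 0) * F $$ (j,i))"
    using F k i by (simp add: scalar_prod_def atLeast0LessThan monm_def)
  also have "\<dots> = (\<Sum>j<d. if j = inv_into UNIV p k then omg ^ (ph j) * F $$ (j,i) else 0)"
  proof (rule sum.cong[OF refl])
    fix j assume "j \<in> {..<d}"
    have e: "(k = p j) = (j = inv_into UNIV p k)" using permutes_inv_eq[OF p, of k j] by auto
    show "(if k = p j then omg ^ (ph j) else 0) * F $$ (j,i) = (if j = inv_into UNIV p k then omg ^ (ph j) * F $$ (j,i) else 0)"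
      unfolding e by simp
  qed
  also have "\<dots> = omg ^ (ph (inv_into UNIV p k)) * F $$ (inv_into UNIV p k, i)" using ik by simp
  finally show ?thesis .
qed

lemma appn_monm:
  assumes p: "p permutes {..<d}" and F: "F \<in> carrier_mat d b"
  shows "appn (monm d p ph * F) v = appn F v"
proof -
  have "appn (monm d p ph * F) v = (\<Sum>k<d. (cmod (\<Sum>i<b. (monm d p ph * F) $$ (k,i) * v $ i))^2)"
    unfolding appn_def using F by simp
  also have "\<dots> = (\<Sum>k<d. (cmod (\<Sum>i<b. F $$ (inv_into UNIV p k, i) * v $ i))^2)"
  proof (rule sum.cong[OF refl])
    fix k assume "k \<in> {..<d}" then have k: "k < d" by simp
    have "(\<Sum>i<b. (monm d p ph * F) $$ (k,i) * v $ i) = omg ^ (ph (inv_into UNIV p k)) * (\<Sum>i<b. F $$ (inv_into UNIV p k, i) * v $ i)"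
      using monm_mult_index[OF p F k] by (simp add: sum_distrib_left mult.assoc)
    then show "(cmod (\<Sum>i<b. (monm d p ph * F) $$ (k,i) * v $ i))^2 = (cmod (\<Sum>i<b. F $$ (inv_into UNIV p k, i) * v $ i))^2"
      by (simp add: norm_mult)
  qed
  also have "\<dots> = (\<Sum>k<d. (cmod (\<Sum>i<b. F $$ (k, i) * v $ i))^2)"
    using sum.permute[OF permutes_inv[OF p], of "\<lambda>k. (cmod (\<Sum>i<b. F $$ (k, i) * v $ i))^2"] by (simp add: comp_def)
  also have "\<dots> = appn F v" unfolding appn_def using F by simp
  finally show ?thesis .
qed

lemma of_real_sum_list': "complex_of_real (sum_list (map f xs)) = sum_list (map (\<lambda>x. complex_of_real (f x)) xs)"
  by (induction xs) auto

lemma kraus_ok: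
  assumes Fs: "\<forall>F\<in>set Fs. F \<in> carrier_mat c b"
    and bound: "\<And>v. v \<in> carrier_vec b \<Longrightarrow> sum_list (map (\<lambda>F. appn F v) Fs) \<le> vn2 b v"
  shows "psd (1\<^sub>m b - msum b (map (\<lambda>F. adj F * F) Fs))"
proof -
  have car: "\<forall>x\<in>set (map (\<lambda>F. adj F * F) Fs). x \<in> carrier_mat b b"
  proof
    fix x assume "x \<in> set (map (\<lambda>F. adj F * F) Fs)"
    then obtain F where F: "F \<in> set Fs" "x = adj F * F" by auto
    have Fc: "F \<in> carrier_mat c b" using Fs F by auto
    show "x \<in> carrier_mat b b" unfolding F(2) using mult_carrier_mat[OF adj_carrier[OF Fc] Fc] .
  qed
  have M: "msum b (map (\<lambda>F. adj F * F) Fs) \<in> carrier_mat b b" using msum_carrier[OF car] .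
  have herm: "\<forall>x\<in>set (map (\<lambda>F. adj F * F) Fs). x \<in> carrier_mat b b \<and> adj x = x"
  proof
    fix x assume "x \<in> set (map (\<lambda>F. adj F * F) Fs)"
    then obtain F where F: "F \<in> set Fs" "x = adj F * F" by auto
    have Fc: "F \<in> carrier_mat c b" using Fs F by auto
    have "adj x = x" unfolding F(2) using adj_mult[OF adj_carrier[OF Fc] Fc] by simp
    then show "x \<in> carrier_mat b b \<and> adj x = x" using car F by auto
  qed
  show ?thesis unfolding psd_iff
  proof (intro conjI ballI)
    show "dim_col (1\<^sub>m b - msum b (map (\<lambda>F. adj F * F) Fs)) = dim_row (1\<^sub>m b - msum b (map (\<lambda>F. adj F * F) Fs))"
      using M by simp
    show "adj (1\<^sub>m b - msum b (map (\<lambda>F. adj F * F) Fs)) = 1\<^sub>m b - msum b (map (\<lambda>F. adj F * F) Fs)"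
      using adj_minus[OF one_carrier_mat M] adj_one adj_msum_herm[OF herm] by simp
    fix v :: "complex vec" assume "v \<in> carrier_vec (dim_row (1\<^sub>m b - msum b (map (\<lambda>F. adj F * F) Fs)))"
    then have v: "v \<in> carrier_vec b" using M by simp
    have q: "qf (msum b (map (\<lambda>F. adj F * F) Fs)) v = sum_list (map (\<lambda>F. complex_of_real (appn F v)) Fs)"
    proof -
      have "qf (msum b (map (\<lambda>F. adj F * F) Fs)) v = sum_list (map (\<lambda>x. qf x v) (map (\<lambda>F. adj F * F) Fs))"
        using qf_msum[OF car] .
      also have "\<dots> = sum_list (map (\<lambda>F. complex_of_real (appn F v)) Fs)"
      proof -
        have "\<And>F. F \<in> set Fs \<Longrightarrow> qf (adj F * F) v = complex_of_real (appn F v)"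
        proof -
          fix F assume "F \<in> set Fs"
          then have Fc: "F \<in> carrier_mat c b" using Fs by auto
          show "qf (adj F * F) v = complex_of_real (appn F v)"
            using qf_gram[OF Fc v] Fc unfolding appn_def by simp
        qed
        then show ?thesis by (simp add: comp_def cong: map_cong)
      qed
      finally show ?thesis .
    qed
    have "qf (1\<^sub>m b - msum b (map (\<lambda>F. adj F * F) Fs)) v = complex_of_real (vn2 b v) - sum_list (map (\<lambda>F. complex_of_real (appn F v)) Fs)"
      using qf_minus[OF one_carrier_mat M] qf_one q unfolding vn2_def by simp
    also have "\<dots> = complex_of_real (vn2 b v - sum_list (map (\<lambda>F. appn F v) Fs))"
      by (simp add: of_real_sum_list')
    finally show "0 \<le> Re (qf (1\<^sub>m b - msum b (map (\<lambda>F. adj F * F) Fs)) v)" using bound[OF v] by simp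
  qed
qed

lemma Tent_herm:
  assumes X: "X \<in> carrier_mat (d*d) (d*d)" and h: "adj X = X" and rt: "r < d*d" "t < d*d"
  shows "Tent d X t r = cnj (Tent d X r t)"
proof -
  have "\<And>p ph. (kron (monm d p ph) (monm d p ph) * X * adj (kron (monm d p ph) (monm d p ph))) $$ (t,r)
     = cnj ((kron (monm d p ph) (monm d p ph) * X * adj (kron (monm d p ph) (monm d p ph))) $$ (r,t))"
  proof -
    fix p ph
    have U: "kron (monm d p ph) (monm d p ph) \<in> carrier_mat (d*d) (d*d)"
      using kron_carrier[of "monm d p ph" "monm d p ph"] by simp
    have c: "kron (monm d p ph) (monm d p ph) * X * adj (kron (monm d p ph) (monm d p ph)) \<in> carrier_mat (d*d) (d*d)"
      using mult_carrier_mat[OF mult_carrier_mat[OF U X] adj_carrier[OF U]] .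
    have "adj (kron (monm d p ph) (monm d p ph) * X * adj (kron (monm d p ph) (monm d p ph))) = kron (monm d p ph) (monm d p ph) * X * adj (kron (monm d p ph) (monm d p ph))"
      by (rule adj_mult3[OF U X h])
    then have "\<forall>i<d*d. \<forall>j<d*d. (kron (monm d p ph) (monm d p ph) * X * adj (kron (monm d p ph) (monm d p ph))) $$ (j,i) = cnj ((kron (monm d p ph) (monm d p ph) * X * adj (kron (monm d p ph) (monm d p ph))) $$ (i,j))"
      using herm_iff[OF c] by blast
    then show "(kron (monm d p ph) (monm d p ph) * X * adj (kron (monm d p ph) (monm d p ph))) $$ (t,r)
     = cnj ((kron (monm d p ph) (monm d p ph) * X * adj (kron (monm d p ph) (monm d p ph))) $$ (r,t))"
      using rt by blast
  qed
  then show ?thesis unfolding Tent_def by (simp add: case_prod_unfold)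
qed

lemma swap1_4:
  "(\<Sum>p\<in>P. \<Sum>a\<in>A. \<Sum>b\<in>B. \<Sum>c\<in>C. \<Sum>e\<in>E. f p a b c e) = (\<Sum>a\<in>A. \<Sum>b\<in>B. \<Sum>c\<in>C. \<Sum>e\<in>E. \<Sum>p\<in>P. f p a b c e)"
proof -
  have "(\<Sum>p\<in>P. \<Sum>a\<in>A. \<Sum>b\<in>B. \<Sum>c\<in>C. \<Sum>e\<in>E. f p a b c e) = (\<Sum>a\<in>A. \<Sum>p\<in>P. \<Sum>b\<in>B. \<Sum>c\<in>C. \<Sum>e\<in>E. f p a b c e)"
    by (rule sum.swap)
  also have "\<dots> = (\<Sum>a\<in>A. \<Sum>b\<in>B. \<Sum>p\<in>P. \<Sum>c\<in>C. \<Sum>e\<in>E. f p a b c e)"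
    by (rule sum.cong[OF refl], rule sum.swap)
  also have "\<dots> = (\<Sum>a\<in>A. \<Sum>b\<in>B. \<Sum>c\<in>C. \<Sum>p\<in>P. \<Sum>e\<in>E. f p a b c e)"
    by (rule sum.cong[OF refl], rule sum.cong[OF refl], rule sum.swap)
  also have "\<dots> = (\<Sum>a\<in>A. \<Sum>b\<in>B. \<Sum>c\<in>C. \<Sum>e\<in>E. \<Sum>p\<in>P. f p a b c e)"
    by (rule sum.cong[OF refl], rule sum.cong[OF refl], rule sum.cong[OF refl], rule sum.swap)
  finally show ?thesis .
qed

lemma swap2_4:
  "(\<Sum>k\<in>K. \<Sum>l\<in>L. \<Sum>a\<in>A. \<Sum>b\<in>B. \<Sum>c\<in>C. \<Sum>e\<in>E. f k l a b c e) = (\<Sum>a\<in>A. \<Sum>b\<in>B. \<Sum>c\<in>C. \<Sum>e\<in>E. \<Sum>k\<in>K. \<Sum>l\<in>L. f k l a b c e)"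
proof -
  have "(\<Sum>k\<in>K. \<Sum>l\<in>L. \<Sum>a\<in>A. \<Sum>b\<in>B. \<Sum>c\<in>C. \<Sum>e\<in>E. f k l a b c e) = (\<Sum>k\<in>K. \<Sum>a\<in>A. \<Sum>b\<in>B. \<Sum>c\<in>C. \<Sum>e\<in>E. \<Sum>l\<in>L. f k l a b c e)"
    by (rule sum.cong[OF refl], rule swap1_4)
  also have "\<dots> = (\<Sum>a\<in>A. \<Sum>b\<in>B. \<Sum>c\<in>C. \<Sum>e\<in>E. \<Sum>k\<in>K. \<Sum>l\<in>L. f k l a b c e)"
    by (rule swap1_4)
  finally show ?thesis .
qed

lemma filt_functional:
  assumes R: "\<rho> \<in> carrier_mat (n*m) (n*m)" and FA: "FA \<in> carrier_mat d n" and FB: "FB \<in> carrier_mat d m"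
  shows "(\<Sum>k<d. \<Sum>l<d. (kron FA FB * \<rho> * adj (kron FA FB)) $$ (k*d+l, l*d+k)) =
    (\<Sum>x1<n. \<Sum>x2<m. \<Sum>y1<n. \<Sum>y2<m. \<rho> $$ (x1*m+x2, y1*m+y2) *
        (\<Sum>k<d. FA $$ (k,x1) * cnj (FB $$ (k,y2))) * cnj (\<Sum>l<d. FA $$ (l,y1) * cnj (FB $$ (l,x2))))"
proof -
  have K: "kron FA FB \<in> carrier_mat (d*d) (n*m)" using kron_carrier[of FA FB] FA FB by simp
  have "(\<Sum>k<d. \<Sum>l<d. (kron FA FB * \<rho> * adj (kron FA FB)) $$ (k*d+l, l*d+k)) =
     (\<Sum>k<d. \<Sum>l<d. \<Sum>x1<n. \<Sum>x2<m. \<Sum>y1<n. \<Sum>y2<m.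
        FA $$ (k,x1) * FB $$ (l,x2) * \<rho> $$ (x1*m+x2, y1*m+y2) * cnj (FA $$ (l,y1) * FB $$ (k,y2)))"
  proof (intro sum.cong refl)
    fix k l assume "k \<in> {..<d}" "l \<in> {..<d}"
    then have kl: "k < d" "l < d" by auto
    have r: "k*d+l < d*d" "l*d+k < d*d" using kl by (auto intro: idx_lt)
    have "(kron FA FB * \<rho> * adj (kron FA FB)) $$ (k*d+l, l*d+k) =
        (\<Sum>x<n*m. \<Sum>y<n*m. kron FA FB $$ (k*d+l,x) * \<rho> $$ (x,y) * cnj (kron FA FB $$ (l*d+k,y)))"
      by (rule mult3_index[OF K R K r])
    also have "\<dots> = (\<Sum>x1<n. \<Sum>x2<m. \<Sum>y<n*m. kron FA FB $$ (k*d+l,x1*m+x2) * \<rho> $$ (x1*m+x2,y) * cnj (kron FA FB $$ (l*d+k,y)))"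
      by (rule sum_split)
    also have "\<dots> = (\<Sum>x1<n. \<Sum>x2<m. \<Sum>y1<n. \<Sum>y2<m. kron FA FB $$ (k*d+l,x1*m+x2) * \<rho> $$ (x1*m+x2,y1*m+y2) * cnj (kron FA FB $$ (l*d+k,y1*m+y2)))"
      by (rule sum.cong[OF refl], rule sum.cong[OF refl], rule sum_split)
    also have "\<dots> = (\<Sum>x1<n. \<Sum>x2<m. \<Sum>y1<n. \<Sum>y2<m.
        FA $$ (k,x1) * FB $$ (l,x2) * \<rho> $$ (x1*m+x2, y1*m+y2) * cnj (FA $$ (l,y1) * FB $$ (k,y2)))"
      by (intro sum.cong refl) (simp add: kron_index[OF FA FB] kl)
    finally show "(kron FA FB * \<rho> * adj (kron FA FB)) $$ (k*d+l, l*d+k) = (\<Sum>x1<n. \<Sum>x2<m. \<Sum>y1<n. \<Sum>y2<m.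
        FA $$ (k,x1) * FB $$ (l,x2) * \<rho> $$ (x1*m+x2, y1*m+y2) * cnj (FA $$ (l,y1) * FB $$ (k,y2)))" .
  qed
  also have "\<dots> = (\<Sum>x1<n. \<Sum>x2<m. \<Sum>y1<n. \<Sum>y2<m. \<Sum>k<d. \<Sum>l<d.
        FA $$ (k,x1) * FB $$ (l,x2) * \<rho> $$ (x1*m+x2, y1*m+y2) * cnj (FA $$ (l,y1) * FB $$ (k,y2)))"
    by (rule swap2_4)
  also have "\<dots> = (\<Sum>x1<n. \<Sum>x2<m. \<Sum>y1<n. \<Sum>y2<m. \<rho> $$ (x1*m+x2, y1*m+y2) *
        (\<Sum>k<d. FA $$ (k,x1) * cnj (FB $$ (k,y2))) * cnj (\<Sum>l<d. FA $$ (l,y1) * cnj (FB $$ (l,x2))))"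
    by (intro sum.cong refl) (simp add: sum_distrib_left sum_distrib_right mult_ac)
  finally show ?thesis .
qed

lemma ptrans_index: "r < n*m \<Longrightarrow> t < n*m \<Longrightarrow> ptrans n m \<rho> $$ (r,t) = \<rho> $$ ((r div m) * m + t mod m, (t div m) * m + r mod m)"
  by (simp add: ptrans_def)

lemma ptrans_dims[simp]: "dim_row (ptrans n m \<rho>) = n*m" "dim_col (ptrans n m \<rho>) = n*m"
  by (simp_all add: ptrans_def)

lemma ptrans_qf:
  shows "qf (ptrans n m \<rho>) v = (\<Sum>x1<n. \<Sum>x2<m. \<Sum>y1<n. \<Sum>y2<m.
      \<rho> $$ (x1*m+x2, y1*m+y2) * cnj (v $ (x1*m+y2)) * v $ (y1*m+x2))"
proof -
  have "qf (ptrans n m \<rho>) v = (\<Sum>r<n*m. \<Sum>t<n*m. cnj (v $ r) * ptrans n m \<rho> $$ (r,t) * v $ t)"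
    unfolding qf_def by simp
  also have "\<dots> = (\<Sum>x1<n. \<Sum>y2<m. \<Sum>t<n*m. cnj (v $ (x1*m+y2)) * ptrans n m \<rho> $$ (x1*m+y2,t) * v $ t)"
    by (rule sum_split)
  also have "\<dots> = (\<Sum>x1<n. \<Sum>y2<m. \<Sum>y1<n. \<Sum>x2<m. cnj (v $ (x1*m+y2)) * ptrans n m \<rho> $$ (x1*m+y2,y1*m+x2) * v $ (y1*m+x2))"
    by (rule sum.cong[OF refl], rule sum.cong[OF refl], rule sum_split)
  also have "\<dots> = (\<Sum>x1<n. \<Sum>y2<m. \<Sum>y1<n. \<Sum>x2<m. \<rho> $$ (x1*m+x2, y1*m+y2) * cnj (v $ (x1*m+y2)) * v $ (y1*m+x2))"
  proof (intro sum.cong refl)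
    fix x1 y2 y1 x2 assume "x1 \<in> {..<n}" "y2 \<in> {..<m}" "y1 \<in> {..<n}" "x2 \<in> {..<m}"
    then have h: "x1 < n" "y2 < m" "y1 < n" "x2 < m" by auto
    have "ptrans n m \<rho> $$ (x1*m+y2,y1*m+x2) = \<rho> $$ (x1*m+x2, y1*m+y2)"
      using h by (simp add: ptrans_index idx_lt)
    then show "cnj (v $ (x1*m+y2)) * ptrans n m \<rho> $$ (x1*m+y2,y1*m+x2) * v $ (y1*m+x2) = \<rho> $$ (x1*m+x2, y1*m+y2) * cnj (v $ (x1*m+y2)) * v $ (y1*m+x2)"
      by (simp add: mult_ac)
  qed
  also have "\<dots> = (\<Sum>x1<n. \<Sum>x2<m. \<Sum>y1<n. \<Sum>y2<m. \<rho> $$ (x1*m+x2, y1*m+y2) * cnj (v $ (x1*m+y2)) * v $ (y1*m+x2))"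
  proof (rule sum.cong[OF refl])
    fix x1
    have "(\<Sum>y2<m. \<Sum>y1<n. \<Sum>x2<m. \<rho> $$ (x1*m+x2, y1*m+y2) * cnj (v $ (x1*m+y2)) * v $ (y1*m+x2)) =
          (\<Sum>y1<n. \<Sum>y2<m. \<Sum>x2<m. \<rho> $$ (x1*m+x2, y1*m+y2) * cnj (v $ (x1*m+y2)) * v $ (y1*m+x2))"
      by (rule sum.swap)
    also have "\<dots> = (\<Sum>y1<n. \<Sum>x2<m. \<Sum>y2<m. \<rho> $$ (x1*m+x2, y1*m+y2) * cnj (v $ (x1*m+y2)) * v $ (y1*m+x2))"
      by (rule sum.cong[OF refl], rule sum.swap)
    also have "\<dots> = (\<Sum>x2<m. \<Sum>y1<n. \<Sum>y2<m. \<rho> $$ (x1*m+x2, y1*m+y2) * cnj (v $ (x1*m+y2)) * v $ (y1*m+x2))"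
      by (rule sum.swap)
    finally show "(\<Sum>y2<m. \<Sum>y1<n. \<Sum>x2<m. \<rho> $$ (x1*m+x2, y1*m+y2) * cnj (v $ (x1*m+y2)) * v $ (y1*m+x2)) =
          (\<Sum>x2<m. \<Sum>y1<n. \<Sum>y2<m. \<rho> $$ (x1*m+x2, y1*m+y2) * cnj (v $ (x1*m+y2)) * v $ (y1*m+x2))" .
  qed
  finally show ?thesis .
qed

lemma ptrans_herm:
  assumes R: "\<rho> \<in> carrier_mat (n*m) (n*m)" and h: "adj \<rho> = \<rho>"
  shows "adj (ptrans n m \<rho>) = ptrans n m \<rho>"
proof -
  have hr: "\<forall>i<n*m. \<forall>j<n*m. \<rho> $$ (j,i) = cnj (\<rho> $$ (i,j))" using herm_iff[OF R] h by blast
  have c: "ptrans n m \<rho> \<in> carrier_mat (n*m) (n*m)" by (simp add: ptrans_def)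
  show ?thesis unfolding herm_iff[OF c]
  proof (intro allI impI)
    fix i j assume ij: "i < n*m" "j < n*m"
    have m: "m > 0" using ij by (auto intro!: Nat.gr0I)
    have a: "(i div m) * m + j mod m < n*m" "(j div m) * m + i mod m < n*m"
      using ij m by (auto intro!: idx_lt simp: less_mult_imp_div_less)
    show "ptrans n m \<rho> $$ (j,i) = cnj (ptrans n m \<rho> $$ (i,j))"
      using ij hr[rule_format, OF a(1) a(2)] by (simp add: ptrans_index)
  qed
qed

lemma kraus_list:
  "concat (map2 (\<lambda>(A,B) L. map (\<lambda>(A',B'). (A' * A, B' * B)) L) (map (\<lambda>A. (A, Bid)) (map g xs))
      (map (\<lambda>x. map (\<lambda>B. (Aid, B)) [h x]) xs)) = map (\<lambda>x. (Aid * g x, h x * Bid)) xs"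
  by (induction xs) auto

lemma perm0: assumes "a < (d::nat)" shows "Transposition.transpose 0 a permutes {..<d} \<and> Transposition.transpose 0 a 0 = a"
  using assms by (auto intro!: permutes_swap_id)

lemma perm01: assumes "a < (d::nat)" "b < d" "a \<noteq> b"
  shows "\<exists>q. q permutes {..<d} \<and> q 0 = a \<and> q 1 = b"
proof -
  define j where "j = Transposition.transpose 0 a 1"
  define q where "q = Transposition.transpose j b \<circ> Transposition.transpose 0 a"
  have d: "0 < d" "1 < d" using assms by auto
  have jlt: "j < d" unfolding j_def using d assms by (auto simp: Transposition.transpose_def)
  have "q permutes {..<d}" unfolding q_def
    using assms jlt d by (intro permutes_compose permutes_swap_id) auto
  moreover have "j \<noteq> a" unfolding j_def by (auto simp: Transposition.transpose_def)
  then have "q 0 = a" unfolding q_def using assms(3) by (simp add: Transposition.transpose_def)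
  moreover have "q 1 = b" unfolding q_def j_def by simp
  ultimately show ?thesis by blast
qed

lemma Tent_form:
  assumes X: "X \<in> carrier_mat (d*d) (d*d)" and ab: "a < d" "b < d" "a' < d" "b' < d"
  shows "Tent d X (a*d+b) (a'*d+b') =
    (if a = b then (if a' = a \<and> b' = a then Tent d X 0 0 else 0)
     else if a' = a \<and> b' = b then Tent d X 1 1
     else if a' = b \<and> b' = a then Tent d X 1 d else 0)"
proof (cases "a = b")
  case True
  show ?thesis
  proof (cases "a' = a \<and> b' = a")
    case True2: True
    obtain q where q: "q permutes {..<d}" "q 0 = a" using perm0[OF ab(1)] by blast
    have d: "0 < d" using ab by simp
    have "Tent d X (q 0 * d + q 0) (q 0 * d + q 0) = Tent d X (0*d+0) (0*d+0)"
      by (rule Tent_perm[OF q(1) X]) (use d in auto)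
    then show ?thesis using True True2 q by simp
  next
    case False
    then show ?thesis using True Tent_zero[OF X ab] by auto
  qed
next
  case False
  obtain q where q: "q permutes {..<d}" "q 0 = a" "q 1 = b" using perm01[OF ab(1,2) False] by blast
  have d: "0 < d" "1 < d" using ab False by auto
  show ?thesis
  proof (cases "a' = a \<and> b' = b")
    case True
    have "Tent d X (q 0 * d + q 1) (q 0 * d + q 1) = Tent d X (0*d+1) (0*d+1)"
      by (rule Tent_perm[OF q(1) X]) (use d in auto)
    then show ?thesis using True False q by simp
  next
    case F2: False
    show ?thesis
    proof (cases "a' = b \<and> b' = a")
      case True
      have "Tent d X (q 0 * d + q 1) (q 1 * d + q 0) = Tent d X (0*d+1) (1*d+0)"
        by (rule Tent_perm[OF q(1) X]) (use d in auto)
      then show ?thesis using True False F2 q by simp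
    next
      case F3: False
      then show ?thesis using False F2 Tent_zero[OF X ab] by auto
    qed
  qed
qed

lemma Tent_gamma_sym:
  assumes X: "X \<in> carrier_mat (d*d) (d*d)" and d: "1 < d"
  shows "Tent d X d 1 = Tent d X 1 d"
proof -
  have q: "Transposition.transpose 0 1 permutes {..<d}" using d by (intro permutes_swap_id) auto
  have "Tent d X (Transposition.transpose 0 1 0 * d + Transposition.transpose 0 1 1) (Transposition.transpose 0 1 1 * d + Transposition.transpose 0 1 0) = Tent d X (0*d+1) (1*d+0)"
    by (rule Tent_perm[OF q X]) (use d in auto)
  then show ?thesis by simp
qed

lemma sum_diag_off:
  fixes x y :: complex
  shows "(\<Sum>k<d. \<Sum>l<d. if k = l then x else y) = of_nat d * x + of_nat d * (of_nat d - 1) * y"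
proof -
  have inner: "(\<Sum>l<d. if k = l then x else y) = x + (of_nat d - 1) * y" if k: "k < d" for k
  proof -
    have "(\<Sum>l<d. if k = l then x else y) = (\<Sum>l<d. y + (if k = l then x - y else 0))"
      by (intro sum.cong refl) auto
    also have "\<dots> = of_nat d * y + (x - y)" using k by (simp add: sum.distrib)
    finally show ?thesis by (simp add: algebra_simps)
  qed
  have "(\<Sum>k<d. \<Sum>l<d. if k = l then x else y) = (\<Sum>k<d. x + (of_nat d - 1) * y)"
    using inner by (intro sum.cong refl) auto
  also have "\<dots> = of_nat d * x + of_nat d * (of_nat d - 1) * y" by (simp add: algebra_simps)
  finally show ?thesis .
qed

lemma times_if1: "x * (if P then 1 else 0) = (if P then x else (0::complex))" by simp
lemma times_if2: "(if P then 1 else 0) * x = (if P then x else (0::complex))" by simp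
lemma cnj_if: "cnj (if P then 1 else 0) = (if P then 1 else (0::complex))" by simp

lemma qf_two:
  assumes A: "A \<in> carrier_mat D D" and ij: "i < D" "j < D" "i \<noteq> j"
  shows "qf A (unit_vec D i + unit_vec D j) = A $$ (i,i) + A $$ (i,j) + A $$ (j,i) + A $$ (j,j)"
proof -
  define e where "e = (\<lambda>(r::nat) (a::nat). if r = a then (1::complex) else 0)"
  have v: "\<And>r. r < D \<Longrightarrow> (unit_vec D i + unit_vec D j) $ r = e r i + e r j"
    unfolding e_def unit_vec_def by simp
  have "qf A (unit_vec D i + unit_vec D j) = (\<Sum>r<D. \<Sum>t<D. (e r i + e r j) * A $$ (r,t) * (e t i + e t j))"
  proof -
    have dA: "dim_row A = D" using A by simp
    show ?thesis unfolding qf_def dA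
      by (rule sum.cong[OF refl], rule sum.cong[OF refl]) (simp add: e_def unit_vec_def)
  qed
  also have "\<dots> = (\<Sum>r<D. \<Sum>t<D. e r i * A $$ (r,t) * e t i) + (\<Sum>r<D. \<Sum>t<D. e r i * A $$ (r,t) * e t j)
      + (\<Sum>r<D. \<Sum>t<D. e r j * A $$ (r,t) * e t i) + (\<Sum>r<D. \<Sum>t<D. e r j * A $$ (r,t) * e t j)"
    by (simp add: algebra_simps sum.distrib)
  also have "\<And>a b. a < D \<Longrightarrow> b < D \<Longrightarrow> (\<Sum>r<D. \<Sum>t<D. e r a * A $$ (r,t) * e t b) = A $$ (a,b)"
  proof -
    fix a b assume ab: "a < D" "b < D"
    have "(\<Sum>r<D. \<Sum>t<D. e r a * A $$ (r,t) * e t b) = (\<Sum>r<D. if r = a then (\<Sum>t<D. if t = b then A $$ (r,t) else 0) else 0)"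
      unfolding e_def by (intro sum.cong refl) (auto simp: times_if1 times_if2)
    also have "\<dots> = A $$ (a,b)" using ab by simp
    finally show "(\<Sum>r<D. \<Sum>t<D. e r a * A $$ (r,t) * e t b) = A $$ (a,b)" .
  qed
  then have "(\<Sum>r<D. \<Sum>t<D. e r i * A $$ (r,t) * e t i) + (\<Sum>r<D. \<Sum>t<D. e r i * A $$ (r,t) * e t j)
      + (\<Sum>r<D. \<Sum>t<D. e r j * A $$ (r,t) * e t i) + (\<Sum>r<D. \<Sum>t<D. e r j * A $$ (r,t) * e t j)
      = A $$ (i,i) + A $$ (i,j) + A $$ (j,i) + A $$ (j,j)" using ij by simp
  finally show ?thesis .
qed

lemma qf_unit:
  assumes A: "A \<in> carrier_mat D D" and i: "i < D"
  shows "qf A (unit_vec D i) = A $$ (i,i)"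
proof -
  have "qf A (unit_vec D i) = (\<Sum>r<D. if r = i then (\<Sum>t<D. if t = i then A $$ (r,t) else 0) else 0)"
  proof -
    have dA: "dim_row A = D" using A by simp
    show ?thesis unfolding qf_def dA
      apply (rule sum.cong[OF refl])
      subgoal for r by (cases "r = i") (auto simp: unit_vec_def times_if1 times_if2 intro!: sum.cong)
      done
  qed
  also have "\<dots> = A $$ (i,i)" using i by simp
  finally show ?thesis .
qed

lemma mtrace_smult: "A \<in> carrier_mat D D \<Longrightarrow> mtrace (c \<cdot>\<^sub>m A) = c * mtrace A"
  unfolding mtrace_def by (simp add: sum_distrib_left)

lemma conj_assoc:
  assumes U: "U \<in> carrier_mat a b" and K: "K \<in> carrier_mat b c" and R: "R \<in> carrier_mat c c"
  shows "(U * K) * R * adj (U * K) = U * (K * R * adj K) * adj U"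
proof -
  have aK: "adj K \<in> carrier_mat c b" and aU: "adj U \<in> carrier_mat b a" using U K by auto
  have "(U * K) * R * adj (U * K) = (U * K) * R * (adj K * adj U)" using adj_mult[OF U K] by simp
  also have "\<dots> = U * (K * R) * (adj K * adj U)" using assoc_mult_mat[OF U K R] by simp
  also have "\<dots> = U * ((K * R) * (adj K * adj U))"
    using assoc_mult_mat[OF U mult_carrier_mat[OF K R] mult_carrier_mat[OF aK aU]] .
  also have "(K * R) * (adj K * adj U) = (K * R * adj K) * adj U"
    using assoc_mult_mat[OF mult_carrier_mat[OF K R] aK aU] by simp
  also have "U * ((K * R * adj K) * adj U) = U * (K * R * adj K) * adj U"
    using assoc_mult_mat[OF U mult_carrier_mat[OF mult_carrier_mat[OF K R] aK] aU] by simp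
  finally show ?thesis .
qed

definition phivec :: "nat \<Rightarrow> complex vec" where
  "phivec d = vec (d*d) (\<lambda>r. if r div d = r mod d then 1 else 0)"

lemma phivec_index: "i < d \<Longrightarrow> j < d \<Longrightarrow> phivec d $ (i*d+j) = (if i = j then 1 else 0)"
  unfolding phivec_def by (simp add: idx_lt)

lemma ptrans_phi:
  assumes S: "S \<in> carrier_mat (d*d) (d*d)"
  shows "qf (ptrans d d S) (phivec d) = (\<Sum>k<d. \<Sum>l<d. S $$ (k*d+l, l*d+k))"
proof -
  have "qf (ptrans d d S) (phivec d) = (\<Sum>x1<d. \<Sum>x2<d. \<Sum>y1<d. \<Sum>y2<d.
      S $$ (x1*d+x2, y1*d+y2) * cnj (phivec d $ (x1*d+y2)) * phivec d $ (y1*d+x2))"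
    by (rule ptrans_qf)
  also have "\<dots> = (\<Sum>x1<d. \<Sum>x2<d. \<Sum>y1<d. if y1 = x2 then (\<Sum>y2<d. if y2 = x1 then S $$ (x1*d+x2, y1*d+y2) else 0) else 0)"
    apply (rule sum.cong[OF refl], rule sum.cong[OF refl], rule sum.cong[OF refl])
    subgoal for x1 x2 y1 by (cases "y1 = x2") (auto simp: phivec_index cnj_if times_if1 times_if2 intro!: sum.cong)
    done
  also have "\<dots> = (\<Sum>k<d. \<Sum>l<d. S $$ (k*d+l, l*d+k))" by simp
  finally show ?thesis .
qed

lemma main_generic:
  fixes n m d :: nat and \<rho> FA FB :: "complex mat" and v :: "complex vec" and kap :: real
  assumes dens: "density_mat (n*m) \<rho>"
    and dle: "d \<le> min n m"
    and FA: "FA \<in> carrier_mat d n" and FB: "FB \<in> carrier_mat d m"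
    and bA: "real (card (IX d)) * frob FA \<le> 1" and bB: "frob FB \<le> 1"
    and C: "\<And>i j. i < n \<Longrightarrow> j < m \<Longrightarrow> (\<Sum>k<d. FA $$ (k,i) * cnj (FB $$ (k,j))) = complex_of_real kap * cnj (v $ (i*m+j))"
    and neg: "Re (qf (ptrans n m \<rho>) v) < 0"
    and kap: "kap > 0"
  shows "\<exists>d a b c. d \<le> min n m
     \<and> real d * a + (b + c) * (real d * (real d - 1) / 2) = 1
     \<and> density_mat (d*d) (rho_bc d a b c)
     \<and> \<not> psd (ptrans d d (rho_bc d a b c))
     \<and> locc_convertible n m d d \<rho> (rho_bc d a b c)"
proof -
  have R: "\<rho> \<in> carrier_mat (n*m) (n*m)" and Rpsd: "psd \<rho>"
    using dens unfolding density_mat_def by auto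
  define g where "g = card (IX d)"
  have g1: "g \<ge> 1" unfolding g_def using IX_nonempty[of d] IX_finite[of d]
    by (metis One_nat_def Suc_leI card_gt_0_iff empty_iff)
  obtain xs where xs: "set xs = IX d" "distinct xs" using finite_distinct_list[OF IX_finite] by blast
  have lxs: "length xs = g" unfolding g_def using xs distinct_card by metis
  define M where "M = (\<lambda>x::(nat\<Rightarrow>nat)\<times>(nat\<Rightarrow>nat). monm d (fst x) (snd x))"
  define GA where "GA = (\<lambda>x. M x * FA)"
  define GB where "GB = (\<lambda>x. M x * FB)"
  have Mc: "\<And>x. M x \<in> carrier_mat d d" unfolding M_def by simp
  have GAc: "\<And>x. GA x \<in> carrier_mat d n" unfolding GA_def using Mc FA by (metis mult_carrier_mat)
  have GBc: "\<And>x. GB x \<in> carrier_mat d m" unfolding GB_def using Mc FB by (metis mult_carrier_mat)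
  have perm: "\<And>x. x \<in> set xs \<Longrightarrow> fst x permutes {..<d}"
  proof -
    fix x assume "x \<in> set xs"
    then have "(fst x, snd x) \<in> IX d" using xs by simp
    then show "fst x permutes {..<d}" unfolding IX_mem by blast
  qed
  have vn2_nn: "\<And>b w. vn2 b w \<ge> 0" unfolding vn2_def by (simp add: sum_nonneg)
  have frob_nn: "frob FA \<ge> 0" unfolding frob_def by (simp add: sum_nonneg)
  have alice: "locc n m d m (map (\<lambda>A. (A, 1\<^sub>m m)) (map GA xs))"
  proof (rule locc.alice)
    show "\<forall>A\<in>set (map GA xs). A \<in> carrier_mat d n" using GAc by auto
    show "psd (1\<^sub>m n - msum n (map (\<lambda>A. adj A * A) (map GA xs)))"
    proof (rule kraus_ok)
      show "\<forall>F\<in>set (map GA xs). F \<in> carrier_mat d n" using GAc by auto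
      fix w :: "complex vec" assume w: "w \<in> carrier_vec n"
      have "sum_list (map (\<lambda>F. appn F w) (map GA xs)) = sum_list (map (\<lambda>x. appn FA w) xs)"
      proof -
        have "\<And>x. x \<in> set xs \<Longrightarrow> appn (GA x) w = appn FA w"
          unfolding GA_def M_def using appn_monm[OF perm FA] by blast
        then show ?thesis by (simp add: comp_def cong: map_cong)
      qed
      also have "\<dots> = real g * appn FA w" using lxs by (simp add: sum_list_triv)
      also have "\<dots> \<le> real g * (frob FA * vn2 n w)"
        using appn_le[of FA w] FA by (intro mult_left_mono) auto
      also have "\<dots> = (real g * frob FA) * vn2 n w" by simp
      also have "\<dots> \<le> 1 * vn2 n w" using bA vn2_nn unfolding g_def by (intro mult_right_mono) auto
      finally show "sum_list (map (\<lambda>F. appn F w) (map GA xs)) \<le> vn2 n w" by simp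
    qed
  qed
  have bob: "\<forall>L\<in>set (map (\<lambda>x. map (\<lambda>B. (1\<^sub>m d :: complex mat, B)) [GB x]) xs). locc d m d d L"
  proof
    fix L assume "L \<in> set (map (\<lambda>x. map (\<lambda>B. (1\<^sub>m d :: complex mat, B)) [GB x]) xs)"
    then obtain x where x: "x \<in> set xs" "L = map (\<lambda>B. (1\<^sub>m d :: complex mat, B)) [GB x]" by auto
    show "locc d m d d L" unfolding x(2)
    proof (rule locc.bob)
      show "\<forall>B\<in>set [GB x]. B \<in> carrier_mat d m" using GBc by auto
      show "psd (1\<^sub>m m - msum m (map (\<lambda>B. adj B * B) [GB x]))"
      proof (rule kraus_ok)
        show "\<forall>F\<in>set [GB x]. F \<in> carrier_mat d m" using GBc by auto
        fix w :: "complex vec" assume w: "w \<in> carrier_vec m"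
        have "sum_list (map (\<lambda>F. appn F w) [GB x]) = appn FB w"
          unfolding GB_def M_def using appn_monm[OF perm[OF x(1)] FB] by simp
        also have "\<dots> \<le> frob FB * vn2 m w" using appn_le[of FB w] FB by simp
        also have "\<dots> \<le> 1 * vn2 m w" using bB vn2_nn by (intro mult_right_mono) auto
        finally show "sum_list (map (\<lambda>F. appn F w) [GB x]) \<le> vn2 m w" by simp
      qed
    qed
  qed
  define Kl where "Kl = concat (map2 (\<lambda>(A,B) L. map (\<lambda>(A',B'). (A' * A, B' * B)) L)
     (map (\<lambda>A. (A, 1\<^sub>m m)) (map GA xs)) (map (\<lambda>x. map (\<lambda>B. (1\<^sub>m d :: complex mat, B)) [GB x]) xs))"
  have locc: "locc n m d d Kl" unfolding Kl_def
    by (rule locc.comp[OF alice _ bob]) simp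
  have Kl_eq: "Kl = map (\<lambda>x. (1\<^sub>m d * GA x, GB x * 1\<^sub>m m)) xs"
    unfolding Kl_def by (rule kraus_list)
  define Kf where "Kf = kron FA FB"
  have Kfc: "Kf \<in> carrier_mat (d*d) (n*m)" unfolding Kf_def using kron_carrier[of FA FB] FA FB by simp
  define tau where "tau = Kf * \<rho> * adj Kf"
  have tauc: "tau \<in> carrier_mat (d*d) (d*d)" unfolding tau_def using Kfc R by auto
  have taupsd: "psd tau" unfolding tau_def by (rule psd_congr[OF Rpsd R Kfc])
  have tauh: "adj tau = tau" using taupsd unfolding psd_def by simp
  define U where "U = (\<lambda>x. kron (M x) (M x))"
  have Uc: "\<And>x. U x \<in> carrier_mat (d*d) (d*d)" unfolding U_def using kron_carrier Mc
    by (metis carrier_matD(1) carrier_matD(2))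
  have term_eq: "\<And>x. (case (1\<^sub>m d * GA x, GB x * 1\<^sub>m m) of (A,B) \<Rightarrow> kron A B * \<rho> * adj (kron A B)) = U x * tau * adj (U x)"
  proof -
    fix x
    have "1\<^sub>m d * GA x = GA x" using left_mult_one_mat[OF GAc] .
    moreover have "GB x * 1\<^sub>m m = GB x" using right_mult_one_mat[OF GBc] .
    moreover have "kron (GA x) (GB x) = U x * Kf"
      unfolding GA_def GB_def U_def Kf_def using kron_mult[OF Mc Mc FA FB] .
    ultimately show "(case (1\<^sub>m d * GA x, GB x * 1\<^sub>m m) of (A,B) \<Rightarrow> kron A B * \<rho> * adj (kron A B)) = U x * tau * adj (U x)"
      unfolding tau_def using conj_assoc[OF Uc Kfc R] by simp
  qed
  define S where "S = apply_kraus (d*d) Kl \<rho>"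
  have S_eq: "S = msum (d*d) (map (\<lambda>x. U x * tau * adj (U x)) xs)"
    unfolding S_def apply_kraus_def Kl_eq using term_eq by (simp add: comp_def cong: map_cong)
  have UtU: "\<And>x. U x * tau * adj (U x) \<in> carrier_mat (d*d) (d*d)"
    using mult_carrier_mat[OF mult_carrier_mat[OF Uc tauc] adj_carrier[OF Uc]] .
  have tcar: "\<forall>y\<in>set (map (\<lambda>x. U x * tau * adj (U x)) xs). y \<in> carrier_mat (d*d) (d*d)"
    using UtU by auto
  have Sc: "S \<in> carrier_mat (d*d) (d*d)" unfolding S_eq by (rule msum_carrier[OF tcar])
  have Spsd: "psd S" unfolding S_eq
    by (rule psd_msum) (use UtU psd_congr[OF taupsd tauc Uc] in auto)
  have S_ent: "\<And>r t. r < d*d \<Longrightarrow> t < d*d \<Longrightarrow> S $$ (r,t) = Tent d tau r t"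
  proof -
    fix r t assume rt: "r < d*d" "t < d*d"
    have "S $$ (r,t) = sum_list (map (\<lambda>y. y $$ (r,t)) (map (\<lambda>x. U x * tau * adj (U x)) xs))"
      unfolding S_eq using msum_index[OF tcar rt] .
    also have "\<dots> = (\<Sum>x\<in>set xs. (U x * tau * adj (U x)) $$ (r,t))"
      using xs(2) by (simp add: sum_list_distinct_conv_sum_set comp_def)
    also have "\<dots> = Tent d tau r t" unfolding Tent_def xs(1) U_def M_def by (simp add: case_prod_unfold)
    finally show "S $$ (r,t) = Tent d tau r t" .
  qed
  define T0 where "T0 = Tent d tau"
  define Q where "Q = qf (ptrans n m \<rho>) v"
  have form: "\<And>a b a' b'. a < d \<Longrightarrow> b < d \<Longrightarrow> a' < d \<Longrightarrow> b' < d \<Longrightarrow> T0 (a*d+b) (a'*d+b') =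
    (if a = b then (if a' = a \<and> b' = a then T0 0 0 else 0)
     else if a' = a \<and> b' = b then T0 1 1
     else if a' = b \<and> b' = a then T0 1 d else 0)"
    unfolding T0_def by (rule Tent_form[OF tauc])
  have funct: "(\<Sum>k<d. \<Sum>l<d. T0 (k*d+l) (l*d+k)) = of_nat g * (complex_of_real (kap^2) * Q)"
  proof -
    have "(\<Sum>k<d. \<Sum>l<d. T0 (k*d+l) (l*d+k)) = of_nat g * (\<Sum>k<d. \<Sum>l<d. tau $$ (k*d+l, l*d+k))"
      unfolding T0_def g_def by (rule Tent_phi[OF tauc])
    also have "(\<Sum>k<d. \<Sum>l<d. tau $$ (k*d+l, l*d+k)) = (\<Sum>x1<n. \<Sum>x2<m. \<Sum>y1<n. \<Sum>y2<m. \<rho> $$ (x1*m+x2, y1*m+y2) *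
        (\<Sum>k<d. FA $$ (k,x1) * cnj (FB $$ (k,y2))) * cnj (\<Sum>l<d. FA $$ (l,y1) * cnj (FB $$ (l,x2))))"
      unfolding tau_def Kf_def by (rule filt_functional[OF R FA FB])
    also have "\<dots> = (\<Sum>x1<n. \<Sum>x2<m. \<Sum>y1<n. \<Sum>y2<m. complex_of_real (kap^2) * (\<rho> $$ (x1*m+x2, y1*m+y2) *
        cnj (v $ (x1*m+y2)) * v $ (y1*m+x2)))"
      apply (rule sum.cong[OF refl], rule sum.cong[OF refl], rule sum.cong[OF refl], rule sum.cong[OF refl])
      subgoal for x1 x2 y1 y2 using C[of x1 y2] C[of y1 x2] by (simp add: power2_eq_square mult_ac)
      done
    also have "\<dots> = complex_of_real (kap^2) * Q"
      unfolding Q_def ptrans_qf by (simp add: sum_distrib_left)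
    finally show ?thesis by simp
  qed
  have funct2: "(\<Sum>k<d. \<Sum>l<d. T0 (k*d+l) (l*d+k)) = of_nat d * T0 0 0 + of_nat d * (of_nat d - 1) * T0 1 d"
  proof -
    have "(\<Sum>k<d. \<Sum>l<d. T0 (k*d+l) (l*d+k)) = (\<Sum>k<d. \<Sum>l<d. if k = l then T0 0 0 else T0 1 d)"
      by (intro sum.cong refl) (simp add: form)
    then show ?thesis by (simp add: sum_diag_off)
  qed
  have ReF: "Re (\<Sum>k<d. \<Sum>l<d. T0 (k*d+l) (l*d+k)) < 0"
  proof -
    have "Re (\<Sum>k<d. \<Sum>l<d. T0 (k*d+l) (l*d+k)) = real g * (kap^2 * Re Q)" unfolding funct by simp
    moreover have "real g * (kap^2 * Re Q) < 0"
      using g1 kap neg unfolding Q_def by (simp add: mult_pos_neg)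
    ultimately show ?thesis by simp
  qed
  have d0: "d > 0"
  proof (rule ccontr)
    assume "\<not> d > 0" then have "d = 0" by simp
    then show False using ReF by simp
  qed
  have tr: "mtrace S = of_nat d * T0 0 0 + of_nat d * (of_nat d - 1) * T0 1 1"
  proof -
    have "mtrace S = (\<Sum>r<d*d. S $$ (r,r))" unfolding mtrace_def using Sc by simp
    also have "\<dots> = (\<Sum>k<d. \<Sum>l<d. S $$ (k*d+l, k*d+l))" by (rule sum_split)
    also have "\<dots> = (\<Sum>k<d. \<Sum>l<d. if k = l then T0 0 0 else T0 1 1)"
      by (intro sum.cong refl) (simp add: S_ent idx_lt form[folded T0_def] T0_def[symmetric])
    finally show ?thesis by (simp add: sum_diag_off)
  qed
  have herm: "\<And>r t. r < d*d \<Longrightarrow> t < d*d \<Longrightarrow> T0 t r = cnj (T0 r t)"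
    unfolding T0_def using Tent_herm[OF tauc tauh] by blast
  have d2lt: "0 < d*d" using d0 by simp
  have alpha_real: "T0 0 0 = complex_of_real (Re (T0 0 0))"
    using herm[OF d2lt d2lt] by (simp add: complex_eq_iff)
  have alpha_nn: "Re (T0 0 0) \<ge> 0"
  proof -
    have "0 \<le> Re (qf S (unit_vec (d*d) 0))" using Spsd Sc unfolding psd_iff by auto
    also have "qf S (unit_vec (d*d) 0) = S $$ (0,0)" by (rule qf_unit[OF Sc d2lt])
    finally show ?thesis using S_ent[OF d2lt d2lt] unfolding T0_def by simp
  qed
  have d2: "d \<ge> 2"
  proof (rule ccontr)
    assume "\<not> d \<ge> 2" then have "d = 1" using d0 by simp
    then show False using ReF alpha_nn unfolding funct2 by simp
  qed
  have dd: "2*d \<le> d*d" using mult_right_mono[OF d2, of d] by simp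
  have i1: "1 < d*d" "d < d*d" "(1::nat) \<noteq> d" using d2 dd by linarith+
  have gamma_real: "T0 1 d = complex_of_real (Re (T0 1 d))"
  proof -
    have "T0 d 1 = T0 1 d" unfolding T0_def by (rule Tent_gamma_sym[OF tauc]) (use d2 in simp)
    moreover have "T0 d 1 = cnj (T0 1 d)" using herm[OF i1(1) i1(2)] .
    ultimately show ?thesis by (simp add: complex_eq_iff)
  qed
  have beta_real: "T0 1 1 = complex_of_real (Re (T0 1 1))"
    using herm[OF i1(1) i1(1)] by (simp add: complex_eq_iff)
  define ra where "ra = Re (T0 0 0)"
  define rb where "rb = Re (T0 1 1)"
  define rc where "rc = Re (T0 1 d)"
  have A: "T0 0 0 = complex_of_real ra" using alpha_real unfolding ra_def .
  have B: "T0 1 1 = complex_of_real rb" using beta_real unfolding rb_def .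
  have G: "T0 1 d = complex_of_real rc" using gamma_real unfolding rc_def .
  have rc_neg: "rc < 0"
  proof -
    have "Re (of_nat d * T0 0 0 + of_nat d * (of_nat d - 1) * T0 1 d) = real d * ra + real d * (real d - 1) * rc"
      unfolding A G by simp
    then have "real d * ra + real d * (real d - 1) * rc < 0" using ReF unfolding funct2 by simp
    moreover have "real d * ra \<ge> 0" using alpha_nn unfolding ra_def by simp
    ultimately have "real d * (real d - 1) * rc < 0" by linarith
    moreover have "real d * (real d - 1) > 0" using d2 by simp
    ultimately show ?thesis
      by (metis less_eq_real_def linorder_not_le mult_nonneg_nonneg)
  qed
  have rb_ge: "rb + rc \<ge> 0"
  proof -
    have "0 \<le> Re (qf S (unit_vec (d*d) 1 + unit_vec (d*d) d))" using Spsd Sc unfolding psd_iff by auto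
    also have "qf S (unit_vec (d*d) 1 + unit_vec (d*d) d) = S $$ (1,1) + S $$ (1,d) + S $$ (d,1) + S $$ (d,d)"
      by (rule qf_two[OF Sc i1])
    also have "\<dots> = T0 1 1 + T0 1 d + T0 1 d + T0 1 1"
    proof -
      have "S $$ (d,1) = T0 (1*d+0) (0*d+1)" using S_ent i1 unfolding T0_def by simp
      also have "\<dots> = T0 1 d" using form[of 1 0 0 1] d2 by simp
      finally have e1: "S $$ (d,1) = T0 1 d" .
      have "S $$ (d,d) = T0 (1*d+0) (1*d+0)" using S_ent i1 unfolding T0_def by simp
      also have "\<dots> = T0 1 1" using form[of 1 0 1 0] d2 by simp
      finally have e2: "S $$ (d,d) = T0 1 1" .
      show ?thesis using e1 e2 S_ent i1 unfolding T0_def by simp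
    qed
    finally show ?thesis unfolding rb_def rc_def by simp
  qed
  define RT where "RT = real d * ra + real d * (real d - 1) * rb"
  have RT_pos: "RT > 0"
  proof -
    have "rb > 0" using rb_ge rc_neg by linarith
    then have "real d * (real d - 1) * rb > 0" using d2 by simp
    moreover have "real d * ra \<ge> 0" using alpha_nn unfolding ra_def by simp
    ultimately show ?thesis unfolding RT_def by linarith
  qed
  have trRT: "mtrace S = complex_of_real RT"
    unfolding tr RT_def A B by simp
  define a where "a = ra / RT"
  define b where "b = (rb - rc) / RT"
  define c where "c = (rb + rc) / RT"
  define sig where "sig = (1 / mtrace S) \<cdot>\<^sub>m S"
  have sig_eq: "sig = complex_of_real (1/RT) \<cdot>\<^sub>m S" unfolding sig_def trRT by simp
  have sig_rho: "sig = rho_bc d a b c"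
  proof (rule eq_matI)
    show "dim_row sig = dim_row (rho_bc d a b c)" "dim_col sig = dim_col (rho_bc d a b c)"
      unfolding sig_eq using Sc by (simp_all add: rho_bc_def)
    fix r t assume "r < dim_row (rho_bc d a b c)" "t < dim_col (rho_bc d a b c)"
    then have rt: "r < d*d" "t < d*d" by (simp_all add: rho_bc_def)
    define i j i' j' where "i = r div d" "j = r mod d" "i' = t div d" "j' = t mod d"
    have ij: "i < d" "j < d" "i' < d" "j' < d" "r = i*d+j" "t = i'*d+j'"
      using rt d0 unfolding i_j_i'_j'_def by (auto simp: less_mult_imp_div_less)
    have "sig $$ (r,t) = complex_of_real (1/RT) * T0 (i*d+j) (i'*d+j')"
      unfolding sig_eq using Sc rt S_ent ij(5,6) unfolding T0_def by simp
    also have "\<dots> = rho_bc d a b c $$ (i*d+j, i'*d+j')"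
      unfolding form[OF ij(1-4)] rho_bc_entry[OF ij(1-4)]
      unfolding A B G a_def b_def c_def using RT_pos
      by (auto simp: field_simps simp flip: of_real_mult of_real_divide)
    finally show "sig $$ (r,t) = rho_bc d a b c $$ (r,t)" using ij(5,6) by simp
  qed
  have norm: "real d * a + (b + c) * (real d * (real d - 1) / 2) = 1"
  proof -
    have "real d * a + (b + c) * (real d * (real d - 1) / 2) = (real d * ra + real d * (real d - 1) * rb) / RT"
      unfolding a_def b_def c_def using RT_pos by (simp add: field_simps)
    also have "\<dots> = 1" using RT_pos unfolding RT_def[symmetric] by simp
    finally show ?thesis .
  qed
  have dens_sig: "density_mat (d*d) sig"
    unfolding density_mat_def
  proof (intro conjI)
    show "sig \<in> carrier_mat (d*d) (d*d)" unfolding sig_eq using Sc by simp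
    show "psd sig" unfolding sig_eq by (rule psd_smult[OF Spsd]) (use RT_pos in simp)
    show "mtrace sig = 1" unfolding sig_def using mtrace_smult[OF Sc] trRT RT_pos by simp
  qed
  have npt: "\<not> psd (ptrans d d sig)"
  proof
    assume p: "psd (ptrans d d sig)"
    have sc: "sig \<in> carrier_mat (d*d) (d*d)" unfolding sig_eq using Sc by simp
    have "0 \<le> Re (qf (ptrans d d sig) (phivec d))" using p unfolding psd_iff by (auto simp: phivec_def)
    also have "qf (ptrans d d sig) (phivec d) = (\<Sum>k<d. \<Sum>l<d. sig $$ (k*d+l, l*d+k))" by (rule ptrans_phi[OF sc])
    also have "\<dots> = complex_of_real (1/RT) * (\<Sum>k<d. \<Sum>l<d. T0 (k*d+l) (l*d+k))"
      unfolding sig_eq sum_distrib_left using Sc S_ent idx_lt unfolding T0_def by (intro sum.cong refl) simp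
    finally have "0 \<le> (1/RT) * Re (\<Sum>k<d. \<Sum>l<d. T0 (k*d+l) (l*d+k))" by simp
    moreover have "(1/RT) * Re (\<Sum>k<d. \<Sum>l<d. T0 (k*d+l) (l*d+k)) < 0"
      using mult_pos_neg[OF _ ReF, of "1/RT"] RT_pos by simp
    ultimately show False by simp
  qed
  have conv: "locc_convertible n m d d \<rho> sig"
    unfolding locc_convertible_def Let_def
    using locc trRT RT_pos unfolding S_def sig_def by auto
  show ?thesis
    using dle norm dens_sig npt conv unfolding sig_rho by blast
qed

lemma frob_mat: "frob (mat a b f) = (\<Sum>k<a. \<Sum>i<b. (cmod (f (k,i)))^2)"
  unfolding frob_def by (intro sum.cong refl) simp_all

theorem theorem1:
  fixes n m :: nat and \<rho> :: "complex mat"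
  assumes "density_mat (n*m) \<rho>"
    and "\<not> psd (ptrans n m \<rho>)"
  shows "\<exists>d a b c. d \<le> min n m
     \<and> real d * a + (b + c) * (real d * (real d - 1) / 2) = 1
     \<and> density_mat (d*d) (rho_bc d a b c)
     \<and> \<not> psd (ptrans d d (rho_bc d a b c))
     \<and> locc_convertible n m d d \<rho> (rho_bc d a b c)"
proof -
  have R: "\<rho> \<in> carrier_mat (n*m) (n*m)" and Rpsd: "psd \<rho>"
    using assms(1) unfolding density_mat_def by auto
  have Rh: "adj \<rho> = \<rho>" using Rpsd unfolding psd_def by simp
  have Ph: "adj (ptrans n m \<rho>) = ptrans n m \<rho>" by (rule ptrans_herm[OF R Rh])
  obtain v where v: "v \<in> carrier_vec (n*m)" and neg: "Re (qf (ptrans n m \<rho>) v) < 0"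
    using assms(2) Ph unfolding psd_iff by (auto simp: not_le)
  define d where "d = min n m"
  define g where "g = card (IX d)"
  have g1: "g \<ge> 1" unfolding g_def using IX_nonempty[of d] IX_finite[of d]
    by (metis One_nat_def Suc_leI card_gt_0_iff empty_iff)
  define W2 where "W2 = vn2 (n*m) v"
  have W2nn: "W2 \<ge> 0" unfolding W2_def vn2_def by (simp add: sum_nonneg)
  define D0 where "D0 = real g * (real d + W2) + 1"
  have D0pos: "D0 > 0" unfolding D0_def using W2nn by (simp add: add_nonneg_pos)
  define s where "s = 1 / sqrt D0"
  have spos: "s > 0" unfolding s_def using D0pos by simp
  have s2: "s^2 = 1 / D0" unfolding s_def using D0pos by (simp add: power_divide)
  have b1: "real g * (real d * s^2) \<le> 1"
    unfolding s2 using D0pos W2nn g1 unfolding D0_def by (simp add: field_simps)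
  have b2: "real g * (s^2 * W2) \<le> 1"
    unfolding s2 using D0pos W2nn g1 unfolding D0_def by (simp add: field_simps)
  have g1r: "(1::real) \<le> real g" using g1 by simp
  have b3: "real d * s^2 \<le> 1"
  proof -
    have "real d * s^2 \<le> real g * (real d * s^2)" using mult_right_mono[OF g1r, of "real d * s^2"] by simp
    then show ?thesis using b1 by linarith
  qed
  have b4: "s^2 * W2 \<le> 1"
  proof -
    have "s^2 * W2 \<le> real g * (s^2 * W2)" using mult_right_mono[OF g1r, of "s^2 * W2"] W2nn by simp
    then show ?thesis using b2 by linarith
  qed
  have W2split: "W2 = (\<Sum>i<n. \<Sum>j<m. (cmod (v $ (i*m+j)))^2)"
    unfolding W2_def vn2_def by (rule sum_split)
  show ?thesis
  proof (cases "n \<le> m")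
    case True
    then have dn: "d = n" unfolding d_def by simp
    define FA where "FA = mat d n (\<lambda>(k,i). if k = i then complex_of_real s else 0)"
    define FB where "FB = mat d m (\<lambda>(k,j). complex_of_real s * v $ (k*m+j))"
    have FA: "FA \<in> carrier_mat d n" and FB: "FB \<in> carrier_mat d m" unfolding FA_def FB_def by auto
    have fA: "frob FA = real d * s^2"
    proof -
      have "frob FA = (\<Sum>k<d. \<Sum>i<n. if k = i then s^2 else 0)"
        unfolding FA_def frob_mat by (intro sum.cong refl) (simp add: power2_eq_square)
      also have "\<dots> = real d * s^2" using dn by simp
      finally show ?thesis .
    qed
    have fB: "frob FB = s^2 * W2"
    proof -
      have "frob FB = (\<Sum>k<n. \<Sum>j<m. s^2 * (cmod (v $ (k*m+j)))^2)"
        unfolding FB_def frob_mat dn using spos by (intro sum.cong refl) (simp add: norm_mult power_mult_distrib)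
      then show ?thesis unfolding W2split by (simp add: sum_distrib_left)
    qed
    show ?thesis
    proof (rule main_generic[OF assms(1) _ FA FB _ _ _ neg])
      show "d \<le> min n m" unfolding d_def by simp
      show "real (card (IX d)) * frob FA \<le> 1" using b1 fA unfolding g_def by simp
      show "frob FB \<le> 1" using b4 fB by simp
      show "s^2 > 0" using spos by simp
      fix i j assume ij: "i < n" "j < m"
      have "(\<Sum>k<d. FA $$ (k,i) * cnj (FB $$ (k,j))) = (\<Sum>k<d. if k = i then complex_of_real s * cnj (complex_of_real s * v $ (i*m+j)) else 0)"
        unfolding FA_def FB_def using ij dn by (intro sum.cong refl) auto
      also have "\<dots> = complex_of_real (s^2) * cnj (v $ (i*m+j))"
        using ij dn by (simp add: power2_eq_square)
      finally show "(\<Sum>k<d. FA $$ (k,i) * cnj (FB $$ (k,j))) = complex_of_real (s^2) * cnj (v $ (i*m+j))" .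
    qed
  next
    case False
    then have dm: "d = m" unfolding d_def by simp
    define FA where "FA = mat d n (\<lambda>(k,i). complex_of_real s * cnj (v $ (i*m+k)))"
    define FB where "FB = mat d m (\<lambda>(k,j). if k = j then complex_of_real s else 0)"
    have FA: "FA \<in> carrier_mat d n" and FB: "FB \<in> carrier_mat d m" unfolding FA_def FB_def by auto
    have fB: "frob FB = real d * s^2"
    proof -
      have "frob FB = (\<Sum>k<d. \<Sum>j<m. if k = j then s^2 else 0)"
        unfolding FB_def frob_mat by (intro sum.cong refl) (simp add: power2_eq_square)
      also have "\<dots> = real d * s^2" using dm by simp
      finally show ?thesis .
    qed
    have fA: "frob FA = s^2 * W2"
    proof -
      have "frob FA = (\<Sum>k<m. \<Sum>i<n. s^2 * (cmod (v $ (i*m+k)))^2)"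
        unfolding FA_def frob_mat dm using spos by (intro sum.cong refl) (simp add: norm_mult power_mult_distrib)
      also have "\<dots> = (\<Sum>i<n. \<Sum>k<m. s^2 * (cmod (v $ (i*m+k)))^2)" by (rule sum.swap)
      finally show ?thesis unfolding W2split by (simp add: sum_distrib_left)
    qed
    show ?thesis
    proof (rule main_generic[OF assms(1) _ FA FB _ _ _ neg])
      show "d \<le> min n m" unfolding d_def by simp
      show "real (card (IX d)) * frob FA \<le> 1" using b2 fA unfolding g_def by simp
      show "frob FB \<le> 1" using b3 fB by simp
      show "s^2 > 0" using spos by simp
      fix i j assume ij: "i < n" "j < m"
      have "(\<Sum>k<d. FA $$ (k,i) * cnj (FB $$ (k,j))) = (\<Sum>k<d. if k = j then complex_of_real s * cnj (v $ (i*m+j)) * complex_of_real s else 0)"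
        unfolding FA_def FB_def using ij dm by (intro sum.cong refl) auto
      also have "\<dots> = complex_of_real (s^2) * cnj (v $ (i*m+j))"
        using ij dm by (simp add: power2_eq_square)
      finally show "(\<Sum>k<d. FA $$ (k,i) * cnj (FB $$ (k,j))) = complex_of_real (s^2) * cnj (v $ (i*m+j))" .
    qed
  qed
qed

end
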